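(* Let $A,\Delta A\in\mathbb{R}^{n\times m}$, $\widetilde A=A+\Delta A$, $1\le r<\min\{n,m\}$, $\operatorname{rank}(A)\ge r$, and assume $\sigma_r-\widetilde\sigma_{r+1}>0$ and $\widetilde\sigma_r-\sigma_{r+1}>0$. Then, with the notation of the context, \[\|\sin\Theta(U_1,\widetilde U_1)\|=\big\|F_U^{12}\circ(U_1^T(\Delta A)\widetilde V_2\widetilde\Sigma_2^T+\Sigma_1 V_1^T(\Delta A)^T\widetilde U_2)\big\|=\big\|F_U^{21}\circ(U_2^T(\Delta A)\widetilde V_1\widetilde\Sigma_1^T+\Sigma_2 V_2^T(\Delta A)^T\widetilde U_1)\big\|,\] \[\|\sin\Theta(V_1,\widetilde V_1)\|=\big\|F_V^{12}\circ(\Sigma_1^T U_1^T(\Delta A)\widetilde V_2+ V_1^T(\Delta A)^T\widetilde U_2\widetilde\Sigma_2)\big\|=\big\|F_V^{21}\circ(\Sigma_2^T U_2^T(\Delta A)\widetilde V_1+ V_2^T(\Delta A)^T\widetilde U_1\widetilde\Sigma_1)\big\|.\]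
   Context: $A=U\Sigma V^T$, $\widetilde A=\widetilde U\widetilde\Sigma\widetilde V^T$ are full SVDs ($U,\widetilde U\in\mathbb{R}^{n\times n}$, $V,\widetilde V\in\mathbb{R}^{m\times m}$ orthogonal, $\Sigma,\widetilde\Sigma\in\mathbb{R}^{n\times m}$ rectangular diagonal with nonincreasing nonnegative diagonals $\sigma_1\ge\dots$, $\widetilde\sigma_1\ge\dots$); $\sigma_i=\widetilde\sigma_i=0$ for $i>\min\{n,m\}$. Partition $U=(U_1\ U_2)$, $U_1\in\mathbb{R}^{n\times r}$; $V=(V_1\ V_2)$, $V_1\in\mathbb{R}^{m\times r}$; $\Sigma_1=\mathrm{diag}(\sigma_1,\dots,\sigma_r)$, $\Sigma_2\in\mathbb{R}^{(n-r)\times(m-r)}$ rectangular diagonal with diagonal $\sigma_{r+1},\sigma_{r+2},\dots$; likewise with tildes. $\circ$ is the Hadamard product; $\|\cdot\|$ is the spectral norm. $(F_U^{12})_{i,j-r}=1/(\widetilde\sigma_j^2-\sigma_i^2)$ for $1\le i\le r<j\le n$; $(F_U^{21})_{i-r,j}=1/(\widetilde\sigma_j^2-\sigma_i^2)$ for $r<i\le n$, $1\le j\le r$; $F_V^{12},F_V^{21}$ are defined the same way with $n$ replaced by $m$. For $X,\widetilde X\in\mathbb{R}^{d\times r}$ with orthonormal columns, if $\zeta_1\ge\dots\ge\zeta_r$ are the singular values of $X^T\widetilde X$, then $\sin\Theta(X,\widetilde X)=\mathrm{diag}(\sqrt{1-\zeta_1^2},\dots,\sqrt{1-\zeta_r^2})$.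 *)

theory Defs
  imports Complex_Main "Jordan_Normal_Form.DL_Rank"
begin

(* Matrices are Jordan_Normal_Form matrices ("real mat") with explicit dimensions.
   All indices are 0-based: paper index k corresponds to Isabelle index k-1. *)

definition orth_mat :: "real mat \<Rightarrow> nat \<Rightarrow> bool" where
  "orth_mat U k \<longleftrightarrow> U \<in> carrier_mat k k \<and> transpose_mat U * U = 1\<^sub>m k"

definition is_full_svd :: "real mat \<Rightarrow> real mat \<Rightarrow> real mat \<Rightarrow> real mat \<Rightarrow> bool" where
  "is_full_svd A U S V \<longleftrightarrow>
     orth_mat U (dim_row A) \<and> orth_mat V (dim_col A) \<and>
     S \<in> carrier_mat (dim_row A) (dim_col A) \<and>
     (\<forall>i<dim_row A. \<forall>j<dim_col A. i \<noteq> j \<longrightarrow> S $$ (i,j) = 0) \<and>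
     (\<forall>i<min (dim_row A) (dim_col A). 0 \<le> S $$ (i,i)) \<and>
     (\<forall>i j. i \<le> j \<and> j < min (dim_row A) (dim_col A) \<longrightarrow> S $$ (j,j) \<le> S $$ (i,i)) \<and>
     A = U * S * transpose_mat V"

definition sval :: "real mat \<Rightarrow> nat \<Rightarrow> real" where
  "sval S i = (if i < min (dim_row S) (dim_col S) then S $$ (i,i) else 0)"

definition singular_values :: "real mat \<Rightarrow> nat \<Rightarrow> real" where
  "singular_values M i = sval (SOME S. \<exists>U V. is_full_svd M U S V) i"

definition sin_Theta :: "real mat \<Rightarrow> real mat \<Rightarrow> real mat" where
  "sin_Theta X Y = mat (dim_col X) (dim_col X)
     (\<lambda>(i,j). if i = j then sqrt (1 - (singular_values (transpose_mat X * Y) i)\<^sup>2) else 0)"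

definition vnorm :: "real vec \<Rightarrow> real" where
  "vnorm x = sqrt (x \<bullet> x)"

definition spec_norm :: "real mat \<Rightarrow> real" where
  "spec_norm M = Sup {vnorm (M *\<^sub>v x) | x. x \<in> carrier_vec (dim_col M) \<and> vnorm x = 1}"

definition hadamard :: "real mat \<Rightarrow> real mat \<Rightarrow> real mat" (infixl "\<circ>\<^sub>H" 70) where
  "hadamard A B = mat (dim_row A) (dim_col A) (\<lambda>ij. A $$ ij * B $$ ij)"

definition blk :: "real mat \<Rightarrow> nat \<Rightarrow> nat \<Rightarrow> nat \<Rightarrow> nat \<Rightarrow> real mat" where
  "blk M r0 c0 nr nc = mat nr nc (\<lambda>(i,j). M $$ (i + r0, j + c0))"

(* F^{12}: (F^{12})_{i,j-r} = 1/(st_j^2 - s_i^2), 1<=i<=r<j<=d  (here 0-based) *)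
definition F12 :: "real mat \<Rightarrow> real mat \<Rightarrow> nat \<Rightarrow> nat \<Rightarrow> real mat" where
  "F12 S St r d = mat r (d - r) (\<lambda>(i,j). 1 / ((sval St (j + r))\<^sup>2 - (sval S i)\<^sup>2))"

(* F^{21}: (F^{21})_{i-r,j} = 1/(st_j^2 - s_i^2), r<i<=d, 1<=j<=r  (here 0-based) *)
definition F21 :: "real mat \<Rightarrow> real mat \<Rightarrow> nat \<Rightarrow> nat \<Rightarrow> real mat" where
  "F21 S St r d = mat (d - r) r (\<lambda>(i,j). 1 / ((sval St j)\<^sup>2 - (sval S (i + r))\<^sup>2))"

end

theory Submission
  imports Defs "Jordan_Normal_Form.Schur_Decomposition"
begin


lemma sym_eigenvalue_real:
  fixes A :: "real mat"
  assumes A: "A \<in> carrier_mat n n" and sym: "transpose_mat A = A" and n: "0 < n"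
  shows "\<exists>e. eigenvalue A e"
proof -
  let ?A = "map_mat complex_of_real A"
  have Ac: "?A \<in> carrier_mat n n" using A by simp
  from char_poly_factorized[OF Ac] obtain as where cp: "char_poly ?A = (\<Prod>a\<leftarrow>as. [:- a, 1:])"
    and len: "length as = n" by blast
  then obtain l rest where as: "as = l # rest" using n by (cases as) auto
  have "poly (char_poly ?A) l = 0" unfolding cp as by simp
  hence "eigenvalue ?A l" using eigenvalue_root_char_poly[OF Ac] by simp
  then obtain v where ev: "eigenvector ?A v l" unfolding eigenvalue_def by blast
  hence v: "v \<in> carrier_vec n" "v \<noteq> 0\<^sub>v n" "?A *\<^sub>v v = l \<cdot>\<^sub>v v" using Ac unfolding eigenvector_def by auto
  define s where "s = (\<Sum>i<n. cnj (v$i) * (?A *\<^sub>v v)$i)"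
  have s1: "s = l * (\<Sum>i<n. cnj (v$i) * v$i)" unfolding s_def v(3) sum_distrib_left
    by (rule sum.cong, insert v(1), auto)
  have s2: "s = (\<Sum>i<n. \<Sum>j<n. cnj (v$i) * of_real (A$$(i,j)) * v$j)" unfolding s_def
    apply (rule sum.cong[OF refl])
    using A v(1) by (auto simp: scalar_prod_def sum_distrib_left atLeast0LessThan mult.assoc)
  have "cnj s = (\<Sum>i<n. \<Sum>j<n. v$i * of_real (A$$(i,j)) * cnj (v$j))" unfolding s2 by simp
  also have "\<dots> = (\<Sum>j<n. \<Sum>i<n. v$i * of_real (A$$(i,j)) * cnj (v$j))" by (rule sum.swap)
  also have "\<dots> = s" unfolding s2
  proof (rule sum.cong[OF refl], rule sum.cong[OF refl])
    fix i j assume "i \<in> {..<n}" "j \<in> {..<n}"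
    hence "A $$ (j,i) = A $$ (i,j)" using arg_cong[OF sym, of "\<lambda>M. M $$ (i,j)"] A by auto
    thus "v $ j * complex_of_real (A $$ (j, i)) * cnj (v $ i) = cnj (v $ i) * complex_of_real (A $$ (i, j)) * v $ j"
      by simp
  qed
  finally have "Im s = 0" by (metis cnj.sel(2) equation_minus_iff neg_equal_zero)
  define R where "R = (\<Sum>i<n. (cmod (v$i))^2)"
  have NR: "(\<Sum>i<n. cnj (v$i) * v$i) = of_real R" unfolding R_def of_real_sum
    by (rule sum.cong, auto simp: complex_norm_square mult.commute[of "cnj _"] simp del: of_real_power)
  obtain i where i: "i < n" "v $ i \<noteq> 0" using v(1,2) by (metis eq_vecI carrier_vecD index_zero_vec)
  have "R > 0" unfolding R_def
    by (rule sum_pos2[of _ i], insert i, auto)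
  have "Im l * R = 0" using \<open>Im s = 0\<close> unfolding s1 NR by simp
  hence Iml: "Im l = 0" using \<open>R > 0\<close> by simp
  hence l: "l = of_real (Re l)" by (simp add: complex_eq_iff)
  have "of_real (poly (char_poly A) (Re l)) = (0::complex)"
    using \<open>poly (char_poly ?A) l = 0\<close> unfolding of_real_hom.char_poly_hom[OF A]
    by (subst (asm) l, simp only: of_real_hom.poly_map_poly)
  hence "poly (char_poly A) (Re l) = 0" by simp
  thus ?thesis using eigenvalue_root_char_poly[OF A] by blast
qed



definition orthonormal :: "real vec list \<Rightarrow> bool" where
  "orthonormal ws \<longleftrightarrow> (\<forall>i<length ws. \<forall>j<length ws. ws!i \<bullet> ws!j = (if i = j then 1 else 0))"

lemma self_scalar_pos:
  fixes v :: "real vec"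
  assumes v: "v \<in> carrier_vec n" "v \<noteq> 0\<^sub>v n"
  shows "v \<bullet> v > 0"
proof -
  obtain i where i: "i < n" "v $ i \<noteq> 0" using v by (metis eq_vecI carrier_vecD index_zero_vec)
  have "v \<bullet> v = (\<Sum>j\<in>{0..<n}. v$j * v$j)" using v by (simp add: scalar_prod_def)
  also have "\<dots> > 0" by (rule sum_pos2[of _ i], insert i, auto, metis not_real_square_gt_zero)
  finally show ?thesis .
qed

lemma self_scalar_nonneg:
  fixes v :: "real vec"
  shows "v \<bullet> v \<ge> 0"
  unfolding scalar_prod_def by (rule sum_nonneg, auto)

lemma ortho_extend1:
  assumes ps: "set ps \<subseteq> carrier_vec n" and on: "orthonormal ps" and k: "length ps < n"
  shows "\<exists>w \<in> carrier_vec n. orthonormal (ps @ [w])"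
proof -
  let ?k = "length ps"
  define c where "c = (\<lambda>i. if i < ?k then ps ! i else 0\<^sub>v n)"
  define B where "B = mat\<^sub>r n n (\<lambda>i. if i = n - 1 then 0\<^sub>v n else c i)"
  have psi: "ps ! i \<in> carrier_vec n" if "i < ?k" for i using ps nth_mem[OF that] by auto
  have cc: "c \<in> {0..<n} \<rightarrow> carrier_vec n" using psi unfolding c_def by auto
  have "det B = 0" unfolding B_def by (rule det_row_0[OF _ cc], insert k, auto)
  moreover have B: "B \<in> carrier_mat n n" unfolding B_def by auto
  ultimately obtain v where v: "v \<in> carrier_vec n" "v \<noteq> 0\<^sub>v n" "B *\<^sub>v v = 0\<^sub>v n"
    using det_0_iff_vec_prod_zero[OF B] by blast
  have orth: "ps ! i \<bullet> v = 0" if i: "i < ?k" for i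
  proof -
    have "(B *\<^sub>v v) $ i = 0" using v(3) i k by simp
    moreover have "row B i = ps ! i" unfolding B_def using i k psi[OF i]
      by (subst row_mat_of_row_fun, auto simp: c_def)
    ultimately show ?thesis using i k B by simp
  qed
  define w where "w = (1 / sqrt (v \<bullet> v)) \<cdot>\<^sub>v v"
  have vv: "v \<bullet> v > 0" by (rule self_scalar_pos[OF v(1,2)])
  have w: "w \<in> carrier_vec n" unfolding w_def using v by auto
  have ww: "w \<bullet> w = 1" unfolding w_def using v vv
    by (simp add: real_sqrt_mult[symmetric])
  have pw: "ps ! i \<bullet> w = 0" if "i < ?k" for i unfolding w_def using orth[OF that] psi[OF that] v(1) by simp
  have wp: "w \<bullet> ps ! i = 0" if "i < ?k" for i
    using pw[OF that] comm_scalar_prod[OF w psi[OF that]] by auto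
  have "orthonormal (ps @ [w])" unfolding orthonormal_def
  proof (intro allI impI)
    fix i j assume i: "i < length (ps @ [w])" and j: "j < length (ps @ [w])"
    show "(ps @ [w]) ! i \<bullet> (ps @ [w]) ! j = (if i = j then 1 else 0)"
    proof (cases "i < ?k")
      case True
      then show ?thesis
      proof (cases "j < ?k")
        case True
        then show ?thesis using on \<open>i < ?k\<close> unfolding orthonormal_def by (auto simp: nth_append)
      next
        case False
        then have "j = ?k" using j by auto
        then show ?thesis using pw[OF \<open>i < ?k\<close>] \<open>i < ?k\<close> by (auto simp: nth_append)
      qed
    next
      case False
      then have "i = ?k" using i by auto
      then show ?thesis
      proof (cases "j < ?k")
        case True
        then show ?thesis using wp[OF True] \<open>i = ?k\<close> by (auto simp: nth_append)
      next
        case False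
        then have "j = ?k" using j by auto
        then show ?thesis using ww \<open>i = ?k\<close> by (auto simp: nth_append)
      qed
    qed
  qed
  thus ?thesis using w by blast
qed

lemma ortho_complete:
  assumes "set ps \<subseteq> carrier_vec n" and "orthonormal ps" and "length ps \<le> n"
  shows "\<exists>ws. set ws \<subseteq> carrier_vec n \<and> orthonormal ws \<and> length ws = n \<and> take (length ps) ws = ps"
  using assms
proof (induction "n - length ps" arbitrary: ps)
  case 0
  then show ?case by (intro exI[of _ ps], auto)
next
  case (Suc d)
  have "length ps < n" using Suc(2) by auto
  then obtain w where w: "w \<in> carrier_vec n" "orthonormal (ps @ [w])"
    using ortho_extend1[of ps n] Suc(3,4) by auto
  have "d = n - length (ps @ [w])" using Suc(2) by auto
  from Suc(1)[OF this] w Suc(2-5) \<open>length ps < n\<close> have "\<exists>ws. set ws \<subseteq> carrier_vec n \<and> orthonormal ws \<and> length ws = n \<and> take (length (ps @ [w])) ws = ps @ [w]"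
    by auto
  then obtain ws where
    ws: "set ws \<subseteq> carrier_vec n" "orthonormal ws" "length ws = n" "take (length (ps @ [w])) ws = ps @ [w]"
    by blast
  have "take (length ps) ws = ps"
    using arg_cong[OF ws(4), of "take (length ps)"] by (simp add: min_def)
  with ws show ?case by blast
qed

lemma orthonormal_orth_mat:
  assumes ws: "set ws \<subseteq> carrier_vec n" "orthonormal ws" "length ws = n"
  shows "orth_mat (mat_of_cols n ws) n"
  unfolding orth_mat_def
proof
  show "mat_of_cols n ws \<in> carrier_mat n n" using ws by auto
  show "transpose_mat (mat_of_cols n ws) * mat_of_cols n ws = 1\<^sub>m n"
  proof -
    have c: "\<And>j. j < n \<Longrightarrow> ws ! j \<in> carrier_vec n" using ws nth_mem by auto
    show ?thesis by (rule eq_matI, insert ws c, auto simp: orthonormal_def)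
  qed
qed



lemma orth_right:
  assumes "orth_mat Q n" shows "Q * transpose_mat Q = 1\<^sub>m n"
  using assms mat_mult_left_right_inverse[of "transpose_mat Q" n Q] unfolding orth_mat_def by auto

lemma diag_eigenvalue:
  fixes A Q D :: "real mat"
  assumes Q: "orth_mat Q n" and D: "D \<in> carrier_mat n n"
    and diag: "\<forall>i<n. \<forall>j<n. i \<noteq> j \<longrightarrow> D$$(i,j) = 0"
    and A: "A = Q * D * transpose_mat Q" and j: "j < n"
  shows "eigenvalue A (D$$(j,j))"
proof -
  have Qc: "Q \<in> carrier_mat n n" and QQ: "transpose_mat Q * Q = 1\<^sub>m n" using Q unfolding orth_mat_def by auto
  define e where "e = (unit_vec n j :: real vec)"
  define x where "x = Q *\<^sub>v e"
  have e: "e \<in> carrier_vec n" unfolding e_def by simp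
  have x: "x \<in> carrier_vec n" unfolding x_def using Qc e by simp
  have Qx: "transpose_mat Q *\<^sub>v x = e" unfolding x_def
    using assoc_mult_mat_vec[of "transpose_mat Q" n n Q n e, symmetric] Qc e QQ by simp
  have De: "D *\<^sub>v e = D$$(j,j) \<cdot>\<^sub>v e"
    by (rule eq_vecI, insert D diag j, auto simp: e_def)
  have "A *\<^sub>v x = (Q * D) *\<^sub>v (transpose_mat Q *\<^sub>v x)" unfolding A
    by (rule assoc_mult_mat_vec, insert Qc D x, auto)
  also have "\<dots> = Q *\<^sub>v (D *\<^sub>v (transpose_mat Q *\<^sub>v x))"
    by (rule assoc_mult_mat_vec, insert Qc D x, auto)
  also have "\<dots> = Q *\<^sub>v (D$$(j,j) \<cdot>\<^sub>v e)" unfolding Qx De ..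
  also have "\<dots> = D$$(j,j) \<cdot>\<^sub>v x" unfolding x_def using mult_mat_vec[OF Qc e] .
  finally have Ax: "A *\<^sub>v x = D$$(j,j) \<cdot>\<^sub>v x" .
  have x0: "x \<noteq> 0\<^sub>v n"
  proof
    assume "x = 0\<^sub>v n"
    moreover have "transpose_mat Q *\<^sub>v 0\<^sub>v n = 0\<^sub>v n" using Qc by (intro eq_vecI, auto)
    ultimately have "e = 0\<^sub>v n" using Qx by simp
    thus False using j unfolding e_def by (metis index_unit_vec(1) index_zero_vec(1) zero_neq_one)
  qed
  have "dim_row A = n" unfolding A using Qc by simp
  thus ?thesis unfolding eigenvalue_def eigenvector_def using x x0 Ax by auto
qed

theorem spectral:
  fixes A :: "real mat"
  assumes "A \<in> carrier_mat n n" and "transpose_mat A = A"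
  shows "\<exists>Q D. orth_mat Q n \<and> D \<in> carrier_mat n n \<and> (\<forall>i<n. \<forall>j<n. i \<noteq> j \<longrightarrow> D$$(i,j) = 0)
     \<and> (\<forall>i j. i \<le> j \<and> j < n \<longrightarrow> D$$(j,j) \<le> D$$(i,i)) \<and> A = Q * D * transpose_mat Q"
  using assms
proof (induction n arbitrary: A)
  case 0
  show ?case
    by (rule exI[of _ "1\<^sub>m 0"], rule exI[of _ "1\<^sub>m 0"], insert 0, auto simp: orth_mat_def intro!: eq_matI)
next
  case (Suc k A)
  let ?n = "Suc k"
  have A: "A \<in> carrier_mat ?n ?n" and symA: "transpose_mat A = A" by fact+
  define E where "E = {e. eigenvalue A e}"
  have E0: "E \<noteq> {}" using sym_eigenvalue_real[OF A symA] unfolding E_def by auto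
  have cp0: "char_poly A \<noteq> 0" using degree_monic_char_poly[OF A] by auto
  have "finite E" unfolding E_def eigenvalue_root_char_poly[OF A]
    using poly_roots_finite[OF cp0] by simp
  define l where "l = Max E"
  have lE: "l \<in> E" unfolding l_def using \<open>finite E\<close> E0 by simp
  have lmax: "\<And>e. eigenvalue A e \<Longrightarrow> e \<le> l" unfolding l_def using \<open>finite E\<close> E_def by simp
  define v where "v = find_eigenvector A l"
  have ev: "eigenvector A v l" unfolding v_def by (rule find_eigenvector[OF A], insert lE, auto simp: E_def)
  hence v: "v \<in> carrier_vec ?n" "v \<noteq> 0\<^sub>v ?n" "A *\<^sub>v v = l \<cdot>\<^sub>v v" using A unfolding eigenvector_def by auto
  define u where "u = (1 / sqrt (v \<bullet> v)) \<cdot>\<^sub>v v"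
  have vv: "v \<bullet> v > 0" by (rule self_scalar_pos[OF v(1,2)])
  have u: "u \<in> carrier_vec ?n" unfolding u_def using v by auto
  have uu: "u \<bullet> u = 1" unfolding u_def using v vv by (simp add: real_sqrt_mult[symmetric])
  have Au: "A *\<^sub>v u = l \<cdot>\<^sub>v u" unfolding u_def using v mult_mat_vec[OF A v(1)]
    by (simp add: mult_mat_vec[OF A v(1)] smult_smult_assoc mult.commute)
  have "orthonormal [u]" using uu unfolding orthonormal_def by auto
  from ortho_complete[of "[u]" ?n, OF _ this] u obtain ws where
    ws: "set ws \<subseteq> carrier_vec ?n" "orthonormal ws" "length ws = ?n" "take 1 ws = [u]" by auto
  have ws0: "ws ! 0 = u" using ws(4) by (cases ws, auto)
  define W where "W = mat_of_cols ?n ws"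
  have oW: "orth_mat W ?n" unfolding W_def by (rule orthonormal_orth_mat[OF ws(1-3)])
  have W: "W \<in> carrier_mat ?n ?n" and WW: "transpose_mat W * W = 1\<^sub>m ?n"
    using oW unfolding orth_mat_def by auto
  have WW': "W * transpose_mat W = 1\<^sub>m ?n" by (rule orth_right[OF oW])
  have wsc: "\<And>j. j < ?n \<Longrightarrow> ws ! j \<in> carrier_vec ?n" using ws nth_mem by auto
  have colW: "\<And>j. j < ?n \<Longrightarrow> col W j = ws ! j" unfolding W_def using ws wsc by simp
  define A' where "A' = transpose_mat W * A * W"
  have A': "A' \<in> carrier_mat ?n ?n" unfolding A'_def using W A by simp
  have symA': "transpose_mat A' = A'"
  proof -
    have "transpose_mat A' = transpose_mat W * transpose_mat (transpose_mat W * A)"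
      unfolding A'_def using transpose_mult[of "transpose_mat W * A" ?n ?n W ?n] W A by simp
    also have "transpose_mat (transpose_mat W * A) = transpose_mat A * W"
      using transpose_mult[of "transpose_mat W" ?n ?n A ?n] W A by simp
    finally show ?thesis unfolding A'_def symA using W A by simp
  qed
  have A'col: "A' $$ (i,0) = (if i = 0 then l else 0)" if i: "i < ?n" for i
  proof -
    have "A' $$ (i,0) = row (transpose_mat W) i \<bullet> col (A * W) 0"
      unfolding A'_def using W A i by (simp add: assoc_mult_mat[of _ ?n ?n _ ?n _ ?n])
    also have "col (A * W) 0 = A *\<^sub>v col W 0" by (rule col_mult2[OF A W], simp)
    also have "\<dots> = l \<cdot>\<^sub>v u" using colW[of 0] ws0 Au by simp
    also have "row (transpose_mat W) i = ws ! i" using colW[OF i] W i by simp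
    also have "ws ! i \<bullet> (l \<cdot>\<^sub>v u) = l * (ws ! i \<bullet> ws ! 0)" using wsc[OF i] u ws0 by simp
    also have "\<dots> = (if i = 0 then l else 0)" using ws(2,3) i unfolding orthonormal_def by auto
    finally show ?thesis .
  qed
  have A'row: "A' $$ (0,j) = (if j = 0 then l else 0)" if j: "j < ?n" for j
    using A'col[OF j] arg_cong[OF symA', of "\<lambda>M. M $$ (0,j)"] A' j by simp
  define A3 where "A3 = mat k k (\<lambda>(i,j). A' $$ (Suc i, Suc j))"
  have A3: "A3 \<in> carrier_mat k k" unfolding A3_def by simp
  have symA3: "transpose_mat A3 = A3"
  proof (rule eq_matI)
    fix i j assume "i < dim_row A3" "j < dim_col A3"
    thus "transpose_mat A3 $$ (i,j) = A3 $$ (i,j)" unfolding A3_def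
      using arg_cong[OF symA', of "\<lambda>M. M $$ (Suc i, Suc j)"] A' by simp
  qed (auto simp: A3_def)
  from Suc.IH[OF A3 symA3] obtain Q3 D3 where Q3: "orth_mat Q3 k" and D3: "D3 \<in> carrier_mat k k"
    and diag3: "\<forall>i<k. \<forall>j<k. i \<noteq> j \<longrightarrow> D3$$(i,j) = 0"
    and sort3: "\<forall>i j. i \<le> j \<and> j < k \<longrightarrow> D3$$(j,j) \<le> D3$$(i,i)"
    and A3eq: "A3 = Q3 * D3 * transpose_mat Q3" by blast
  have Q3c: "Q3 \<in> carrier_mat k k" and QQ3: "transpose_mat Q3 * Q3 = 1\<^sub>m k" using Q3 unfolding orth_mat_def by auto
  define L where "L = mat 1 1 (\<lambda>_. l)"
  have L: "L \<in> carrier_mat 1 1" unfolding L_def by simp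
  define Q' where "Q' = four_block_mat (1\<^sub>m 1) (0\<^sub>m 1 k) (0\<^sub>m k 1) Q3"
  define D where "D = four_block_mat L (0\<^sub>m 1 k) (0\<^sub>m k 1) D3"
  have Q': "Q' \<in> carrier_mat ?n ?n" unfolding Q'_def using Q3c by (metis four_block_carrier_mat one_carrier_mat plus_1_eq_Suc)
  have D: "D \<in> carrier_mat ?n ?n" unfolding D_def using D3 L by (metis four_block_carrier_mat plus_1_eq_Suc)
  have TQ': "transpose_mat Q' = four_block_mat (1\<^sub>m 1) (0\<^sub>m 1 k) (0\<^sub>m k 1) (transpose_mat Q3)"
    unfolding Q'_def by (subst transpose_four_block_mat, insert Q3c, auto)
  have A'eq: "A' = four_block_mat L (0\<^sub>m 1 k) (0\<^sub>m k 1) A3"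
  proof (rule eq_matI)
    fix i j assume ij: "i < dim_row (four_block_mat L (0\<^sub>m 1 k) (0\<^sub>m k 1) A3)"
       "j < dim_col (four_block_mat L (0\<^sub>m 1 k) (0\<^sub>m k 1) A3)"
    hence i: "i < ?n" and j: "j < ?n" using L A3 by auto
    show "A' $$ (i,j) = four_block_mat L (0\<^sub>m 1 k) (0\<^sub>m k 1) A3 $$ (i,j)"
      using ij L A3 A'col[OF i] A'row[OF j] i j
      by (cases i; cases j, auto simp: L_def A3_def)
  qed (insert A' L A3, auto)
  have QDQ: "Q' * D * transpose_mat Q' = A'"
    unfolding A'eq TQ' unfolding Q'_def D_def
    apply (subst mult_four_block_mat[of _ 1 1 _ k _ k _ _ 1 _ k], insert Q3c D3 L, auto)
    apply (subst mult_four_block_mat[of _ 1 1 _ k _ k _ _ 1 _ k], insert Q3c D3 L A3eq, auto)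
    done
  define Q where "Q = W * Q'"
  have Q: "Q \<in> carrier_mat ?n ?n" unfolding Q_def using W Q' by simp
  have TQ: "transpose_mat Q = transpose_mat Q' * transpose_mat W"
    unfolding Q_def using W Q' transpose_mult by blast
  have oQ': "transpose_mat Q' * Q' = 1\<^sub>m ?n" unfolding TQ' unfolding Q'_def
    by (subst mult_four_block_mat[of _ 1 1 _ k _ k _ _ 1 _ k], insert Q3c QQ3, auto)
  have oQ: "orth_mat Q ?n" unfolding orth_mat_def
  proof
    show "Q \<in> carrier_mat ?n ?n" by fact
    have "transpose_mat Q * Q = transpose_mat Q' * (transpose_mat W * W) * Q'"
      unfolding TQ unfolding Q_def using W Q' by (simp add: assoc_mult_mat[of _ ?n ?n _ ?n _ ?n])
    also have "\<dots> = 1\<^sub>m ?n" unfolding WW using Q' oQ' by simp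
    finally show "transpose_mat Q * Q = 1\<^sub>m ?n" .
  qed
  have Aeq: "A = Q * D * transpose_mat Q"
  proof -
    have "Q * D * transpose_mat Q = W * (Q' * D * transpose_mat Q') * transpose_mat W"
      unfolding TQ unfolding Q_def using W Q' D by (simp add: assoc_mult_mat[of _ ?n ?n _ ?n _ ?n])
    also have "\<dots> = (W * transpose_mat W) * A * (W * transpose_mat W)"
      unfolding QDQ A'_def using W A by (simp add: assoc_mult_mat[of _ ?n ?n _ ?n _ ?n])
    also have "\<dots> = A" unfolding WW' using A by simp
    finally show ?thesis by simp
  qed
  have Dent: "D $$ (i,j) = (if i = 0 \<and> j = 0 then l else if i = 0 \<or> j = 0 then 0 else D3 $$ (i - 1, j - 1))"
    if "i < ?n" "j < ?n" for i j
    unfolding D_def using that L D3 by (auto simp: L_def)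
  have diag: "\<forall>i<?n. \<forall>j<?n. i \<noteq> j \<longrightarrow> D$$(i,j) = 0"
  proof (intro allI impI)
    fix i j assume "i < ?n" "j < ?n" "i \<noteq> j"
    thus "D$$(i,j) = 0" unfolding Dent[OF \<open>i < ?n\<close> \<open>j < ?n\<close>] using diag3
      by (cases i; cases j, auto)
  qed
  have sort: "\<forall>i j. i \<le> j \<and> j < ?n \<longrightarrow> D$$(j,j) \<le> D$$(i,i)"
  proof (intro allI impI)
    fix i j assume ij: "i \<le> j \<and> j < ?n"
    show "D$$(j,j) \<le> D$$(i,i)"
    proof (cases "i = 0")
      case True
      have "eigenvalue A (D$$(j,j))" by (rule diag_eigenvalue[OF oQ D diag Aeq], insert ij, auto)
      hence "D$$(j,j) \<le> l" by (rule lmax)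
      thus ?thesis using True Dent[of 0 0] by simp
    next
      case False
      have "D$$(i,i) = D3$$(i-1,i-1)" using Dent[of i i] ij False by auto
      moreover have "D$$(j,j) = D3$$(j-1,j-1)" using Dent[of j j] ij False by auto
      moreover have "i - 1 \<le> j - 1 \<and> j - 1 < k" using ij False by auto
      hence "D3$$(j-1,j-1) \<le> D3$$(i-1,i-1)" using sort3 by blast
      ultimately show ?thesis by simp
    qed
  qed
  show ?case using oQ D diag sort Aeq by blast
qed



lemma zero_if_self_scalar_zero:
  fixes v :: "real vec"
  assumes "v \<in> carrier_vec n" "v \<bullet> v = 0" shows "v = 0\<^sub>v n"
  using self_scalar_pos[OF assms(1)] assms(2) by force

lemma svd_square_exists:
  fixes M :: "real mat"
  assumes M: "M \<in> carrier_mat r r"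
  shows "\<exists>P S Q. is_full_svd M P S Q"
proof -
  define B where "B = transpose_mat M * M"
  have B: "B \<in> carrier_mat r r" unfolding B_def using M by simp
  have symB: "transpose_mat B = B" unfolding B_def using M transpose_mult[of "transpose_mat M" r r M r] by simp
  from spectral[OF B symB] obtain Q D where Q: "orth_mat Q r" and D: "D \<in> carrier_mat r r"
    and diag: "\<forall>i<r. \<forall>j<r. i \<noteq> j \<longrightarrow> D$$(i,j) = 0"
    and sort: "\<forall>i j. i \<le> j \<and> j < r \<longrightarrow> D$$(j,j) \<le> D$$(i,i)"
    and Beq: "B = Q * D * transpose_mat Q" by blast
  have Qc: "Q \<in> carrier_mat r r" and QQ: "transpose_mat Q * Q = 1\<^sub>m r" using Q unfolding orth_mat_def by auto
  have QQ': "Q * transpose_mat Q = 1\<^sub>m r" by (rule orth_right[OF Q])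
  define N where "N = M * Q"
  have N: "N \<in> carrier_mat r r" unfolding N_def using M Qc by simp
  have NN: "transpose_mat N * N = D"
  proof -
    have "transpose_mat N * N = transpose_mat Q * B * Q"
      unfolding N_def B_def using M Qc transpose_mult[of M r r Q r]
      by (simp add: assoc_mult_mat[of _ r r _ r _ r])
    also have "\<dots> = (transpose_mat Q * Q) * D * (transpose_mat Q * Q)"
      unfolding Beq using Qc D by (simp add: assoc_mult_mat[of _ r r _ r _ r])
    also have "\<dots> = D" unfolding QQ using D by simp
    finally show ?thesis .
  qed
  define c where "c = (\<lambda>i. col N i)"
  have cc: "\<And>i. c i \<in> carrier_vec r" unfolding c_def using N by auto
  have cdot: "c i \<bullet> c j = D$$(i,j)" if "i < r" "j < r" for i j
    using arg_cong[OF NN, of "\<lambda>X. X $$ (i,j)"] that N unfolding c_def by simp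
  define d where "d = (\<lambda>i. D$$(i,i))"
  have d0: "d i \<ge> 0" if "i < r" for i unfolding d_def using cdot[OF that that] self_scalar_nonneg[of "c i"] by simp
  define k where "k = (LEAST i. r \<le> i \<or> d i \<le> 0)"
  have kr: "k \<le> r" unfolding k_def by (rule Least_le, simp)
  have dpos: "d i > 0" if "i < k" for i
    using not_less_Least[OF that[unfolded k_def]] by auto
  have dzero: "d i = 0" if "k \<le> i" "i < r" for i
  proof -
    have "r \<le> k \<or> d k \<le> 0" unfolding k_def by (rule LeastI[of _ r], simp)
    hence "d k \<le> 0" using that by auto
    moreover have "d i \<le> d k" unfolding d_def using sort that by auto
    ultimately show ?thesis using d0[OF that(2)] by simp
  qed
  have c0: "c i = 0\<^sub>v r" if "k \<le> i" "i < r" for i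
    by (rule zero_if_self_scalar_zero[OF cc], insert cdot[of i i] dzero[OF that] that, auto simp: d_def)
  define ps where "ps = map (\<lambda>i. (1 / sqrt (d i)) \<cdot>\<^sub>v c i) [0..<k]"
  have psc: "set ps \<subseteq> carrier_vec r" unfolding ps_def using cc by auto
  have lenps: "length ps = k" unfolding ps_def by simp
  have psi: "ps ! i = (1 / sqrt (d i)) \<cdot>\<^sub>v c i" if "i < k" for i unfolding ps_def using that by simp
  have "orthonormal ps" unfolding orthonormal_def lenps
  proof (intro allI impI)
    fix i j assume i: "i < k" and j: "j < k"
    have "ps ! i \<bullet> ps ! j = (1 / sqrt (d i)) * (1 / sqrt (d j)) * D$$(i,j)"
      unfolding psi[OF i] psi[OF j] using cc[of i] cc[of j] cdot[of i j] i j kr by simp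
    also have "\<dots> = (if i = j then 1 else 0)"
      using diag i j kr dpos[OF i] by (auto simp: d_def real_sqrt_mult[symmetric])
    finally show "ps ! i \<bullet> ps ! j = (if i = j then 1 else 0)" .
  qed
  from ortho_complete[OF psc this] kr lenps obtain ws where
    ws: "set ws \<subseteq> carrier_vec r" "orthonormal ws" "length ws = r" "take k ws = ps" by auto
  have wsi: "ws ! i = ps ! i" if "i < k" for i
    using arg_cong[OF ws(4), of "\<lambda>xs. xs ! i"] that by simp
  have wsc: "\<And>j. j < r \<Longrightarrow> ws ! j \<in> carrier_vec r" using ws nth_mem by auto
  define P where "P = mat_of_cols r ws"
  have oP: "orth_mat P r" unfolding P_def by (rule orthonormal_orth_mat[OF ws(1-3)])
  have Pc: "P \<in> carrier_mat r r" using oP unfolding orth_mat_def by auto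
  define S where "S = mat r r (\<lambda>(i,j). if i = j then sqrt (d i) else 0)"
  have S: "S \<in> carrier_mat r r" unfolding S_def by simp
  have PS: "P * S = N"
  proof (rule eq_matI)
    fix i j assume "i < dim_row N" "j < dim_col N"
    hence i: "i < r" and j: "j < r" using N by auto
    have colS: "col S j = sqrt (d j) \<cdot>\<^sub>v unit_vec r j"
      by (rule eq_vecI, insert j, auto simp: S_def)
    have "(P * S) $$ (i,j) = row P i \<bullet> col S j" using Pc S i j by simp
    also have "\<dots> = sqrt (d j) * P $$ (i,j)" unfolding colS using Pc i j by simp
    also have "P $$ (i,j) = ws ! j $ i" unfolding P_def using ws i j by (simp add: mat_of_cols_index)
    also have "sqrt (d j) * (ws ! j $ i) = N $$ (i,j)"
    proof (cases "j < k")
      case True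
      have "sqrt (d j) * (ws ! j $ i) = sqrt (d j) * (1 / sqrt (d j)) * c j $ i"
        unfolding wsi[OF True] psi[OF True] using cc[of j] i by simp
      also have "\<dots> = c j $ i" using dpos[OF True] by simp
      finally show ?thesis unfolding c_def using N i j by simp
    next
      case False
      hence "c j = 0\<^sub>v r" "d j = 0" using c0 dzero j by auto
      moreover have "col N j $ i = N $$ (i,j)" using N i j by simp
      ultimately show ?thesis using i unfolding c_def by simp
    qed
    finally show "(P * S) $$ (i,j) = N $$ (i,j)" .
  qed (insert Pc S N, auto)
  have Meq: "M = P * S * transpose_mat Q"
  proof -
    have "M = M * (Q * transpose_mat Q)" unfolding QQ' using M by simp
    also have "\<dots> = N * transpose_mat Q" unfolding N_def using M Qc by simp
    finally show ?thesis unfolding PS[symmetric] .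
  qed
  have dims: "dim_row M = r" "dim_col M = r" using M by auto
  have "is_full_svd M P S Q" unfolding is_full_svd_def dims
    using oP Q S Meq d0 sort by (auto simp: S_def d_def)
  thus ?thesis by blast
qed



definition sel :: "nat \<Rightarrow> nat \<Rightarrow> nat \<Rightarrow> real mat" where
  "sel d c k = mat d k (\<lambda>(i,j). if i = j + c then 1 else 0)"

lemma sel_carrier[simp]: "sel d c k \<in> carrier_mat d k"
  unfolding sel_def by simp

lemma sel_dims[simp]: "dim_row (sel d c k) = d" "dim_col (sel d c k) = k"
  unfolding sel_def by simp_all

lemma sum_delta_nat:
  fixes f :: "nat \<Rightarrow> real"
  shows "(\<Sum>l\<in>{0..<d}. if l = a then f l else 0) = (if a < d then f a else 0)"
  by (simp add: sum.delta)

lemma blk_sel: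
  assumes M: "M \<in> carrier_mat a b" and ck: "c + k \<le> b"
  shows "blk M 0 c a k = M * sel b c k"
proof (rule eq_matI)
  fix i j assume ij: "i < dim_row (M * sel b c k)" "j < dim_col (M * sel b c k)"
  hence i: "i < a" and j: "j < k" using M by auto
  have "(M * sel b c k) $$ (i,j) = (\<Sum>l\<in>{0..<b}. M $$ (i,l) * (if l = j + c then 1 else 0))"
    using M i j by (simp add: scalar_prod_def sel_def)
  also have "\<dots> = (\<Sum>l\<in>{0..<b}. if l = j + c then M $$ (i,l) else 0)"
    by (rule sum.cong, auto)
  also have "\<dots> = M $$ (i, j + c)" using j ck by (subst sum_delta_nat, auto)
  finally show "blk M 0 c a k $$ (i,j) = (M * sel b c k) $$ (i,j)" using i j by (simp add: blk_def)
qed (insert M, auto simp: blk_def)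

lemma sel_T_mult:
  assumes M: "M \<in> carrier_mat a b" and rk: "r0 + k \<le> a"
  shows "transpose_mat (sel a r0 k) * M = mat k b (\<lambda>(i,j). M $$ (i + r0, j))"
proof (rule eq_matI)
  fix i j assume ij: "i < dim_row (mat k b (\<lambda>(i,j). M $$ (i + r0, j)))" "j < dim_col (mat k b (\<lambda>(i,j). M $$ (i + r0, j)))"
  hence i: "i < k" and j: "j < b" by auto
  have "(transpose_mat (sel a r0 k) * M) $$ (i,j) = (\<Sum>l\<in>{0..<a}. (if l = i + r0 then 1 else 0) * M $$ (l,j))"
    using M i j by (simp add: scalar_prod_def sel_def)
  also have "\<dots> = (\<Sum>l\<in>{0..<a}. if l = i + r0 then M $$ (l,j) else 0)"
    by (rule sum.cong, auto)
  also have "\<dots> = M $$ (i + r0, j)" using i rk by (subst sum_delta_nat, auto)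
  finally show "(transpose_mat (sel a r0 k) * M) $$ (i,j) = mat k b (\<lambda>(i,j). M $$ (i + r0, j)) $$ (i,j)"
    using i j by simp
qed (insert M, auto)

lemma blk_sel2:
  assumes M: "M \<in> carrier_mat a b" and rk: "r0 + nr \<le> a" and ck: "c0 + nc \<le> b"
  shows "blk M r0 c0 nr nc = transpose_mat (sel a r0 nr) * M * sel b c0 nc"
proof -
  have 1: "transpose_mat (sel a r0 nr) * M = mat nr b (\<lambda>(i,j). M $$ (i + r0, j))" by (rule sel_T_mult[OF M rk])
  have 2: "mat nr b (\<lambda>(i,j). M $$ (i + r0, j)) * sel b c0 nc = blk (mat nr b (\<lambda>(i,j). M $$ (i + r0, j))) 0 c0 nr nc"
    by (rule blk_sel[symmetric], insert ck, auto)
  show ?thesis unfolding 1 2 using ck by (intro eq_matI, auto simp: blk_def)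
qed

lemma sel_TT:
  assumes "c + k \<le> d" shows "transpose_mat (sel d c k) * sel d c k = 1\<^sub>m k"
  using sel_T_mult[OF sel_carrier assms, of c k] assms
  by (intro eq_matI, auto simp: sel_def)

lemma sel_T12:
  assumes "r \<le> d" shows "transpose_mat (sel d 0 r) * sel d r (d - r) = 0\<^sub>m r (d - r)"
  using sel_T_mult[OF sel_carrier[of d r "d - r"], of 0 r] assms
  by (intro eq_matI, auto simp: sel_def)

lemma sel_T21:
  assumes "r \<le> d" shows "transpose_mat (sel d r (d - r)) * sel d 0 r = 0\<^sub>m (d - r) r"
  using sel_T_mult[OF sel_carrier[of d 0 r], of r "d - r"] assms
  by (intro eq_matI, auto simp: sel_def)

lemma sel_sum:
  assumes "r \<le> d"
  shows "sel d 0 r * transpose_mat (sel d 0 r) + sel d r (d - r) * transpose_mat (sel d r (d - r)) = 1\<^sub>m d"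
proof (rule eq_matI)
  fix i j assume "i < dim_row (1\<^sub>m d :: real mat)" "j < dim_col (1\<^sub>m d :: real mat)"
  hence i: "i < d" and j: "j < d" by auto
  have a0: "(sel d 0 r * transpose_mat (sel d 0 r)) $$ (i,j) = (\<Sum>l\<in>{0..<r}. (if i = l then 1 else 0) * (if j = l then 1 else 0))"
    using i j by (simp add: scalar_prod_def sel_def)
  have a: "(sel d 0 r * transpose_mat (sel d 0 r)) $$ (i,j) = (\<Sum>l\<in>{0..<r}. if l = i then (if i = j then 1 else 0) else 0)"
    unfolding a0 by (rule sum.cong, auto)
  have b0: "(sel d r (d - r) * transpose_mat (sel d r (d - r))) $$ (i,j) = (\<Sum>l\<in>{0..<d - r}. (if i = l + r then 1 else 0) * (if j = l + r then 1 else 0))"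
    using i j by (simp add: scalar_prod_def sel_def)
  have b: "(sel d r (d - r) * transpose_mat (sel d r (d - r))) $$ (i,j) = (\<Sum>l\<in>{0..<d - r}. if l + r = i then (if i = j then 1 else 0) else 0)"
    unfolding b0 by (rule sum.cong, auto)
  have b2: "(\<Sum>l\<in>{0..<d - r}. if l + r = i then (if i = j then 1 else 0) else (0::real)) = (if r \<le> i then (if i = j then 1 else 0) else 0)"
  proof (cases "r \<le> i")
    case True
    have "(\<Sum>l\<in>{0..<d - r}. if l + r = i then (if i = j then 1 else 0) else (0::real))
        = (\<Sum>l\<in>{0..<d - r}. if l = i - r then (if i = j then 1 else 0) else (0::real))"
      by (rule sum.cong, insert True, auto)
    also have "\<dots> = (if i = j then 1 else 0)" using True i by (subst sum_delta_nat, auto)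
    finally show ?thesis using True by simp
  qed auto
  show "(sel d 0 r * transpose_mat (sel d 0 r) + sel d r (d - r) * transpose_mat (sel d r (d - r))) $$ (i,j) = 1\<^sub>m d $$ (i,j)"
    using i j unfolding index_add_mat(1) using a b b2
    by (simp add: sum_delta_nat)
qed auto

definition rdiag :: "real mat \<Rightarrow> bool" where
  "rdiag R \<longleftrightarrow> (\<forall>i<dim_row R. \<forall>j<dim_col R. i \<noteq> j \<longrightarrow> R $$ (i,j) = 0)"

lemma diag_gram:
  assumes R: "R \<in> carrier_mat a b" and d: "rdiag R"
  shows "transpose_mat R * R = mat b b (\<lambda>(i,j). if i = j then (sval R i)^2 else 0)"
proof (rule eq_matI)
  fix i j assume "i < dim_row (mat b b (\<lambda>(i,j). if i = j then (sval R i)^2 else 0))"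
     "j < dim_col (mat b b (\<lambda>(i,j). if i = j then (sval R i)^2 else 0))"
  hence i: "i < b" and j: "j < b" by auto
  have "(transpose_mat R * R) $$ (i,j) = (\<Sum>l\<in>{0..<a}. R $$ (l,i) * R $$ (l,j))"
    using R i j by (simp add: scalar_prod_def)
  also have "\<dots> = (\<Sum>l\<in>{0..<a}. if l = i then (if i = j then (R $$ (i,i))^2 else 0) else 0)"
    by (rule sum.cong, insert d R i j, auto simp: rdiag_def power2_eq_square)
  also have "\<dots> = (if i = j then (sval R i)^2 else 0)"
    using R i by (subst sum_delta_nat, auto simp: sval_def)
  finally show "(transpose_mat R * R) $$ (i,j) = mat b b (\<lambda>(i,j). if i = j then (sval R i)^2 else 0) $$ (i,j)"
    using i j by simp
qed (insert R, auto)

lemma rdiag_T: "rdiag R \<Longrightarrow> rdiag (transpose_mat R)"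
  unfolding rdiag_def by auto

lemma sval_T: "sval (transpose_mat R) i = sval R i"
  unfolding sval_def by (auto simp: min.commute)

lemma diag_gram':
  assumes R: "R \<in> carrier_mat a b" and d: "rdiag R"
  shows "R * transpose_mat R = mat a a (\<lambda>(i,j). if i = j then (sval R i)^2 else 0)"
  using diag_gram[of "transpose_mat R" b a] R d rdiag_T[OF d] unfolding sval_T by simp



lemma diag_mult_vec:
  fixes D :: "real mat"
  assumes D: "D \<in> carrier_mat k k" and diag: "\<forall>i<k. \<forall>j<k. i \<noteq> j \<longrightarrow> D$$(i,j) = 0"
    and y: "y \<in> carrier_vec k"
  shows "D *\<^sub>v y = vec k (\<lambda>i. D$$(i,i) * y$i)"
proof (rule eq_vecI)
  fix i assume "i < dim_vec (vec k (\<lambda>i. D$$(i,i) * y$i))"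
  hence i: "i < k" by simp
  have "(D *\<^sub>v y) $ i = (\<Sum>j\<in>{0..<k}. D$$(i,j) * y$j)"
    using D y i by (simp add: scalar_prod_def)
  also have "\<dots> = (\<Sum>j\<in>{0..<k}. if j = i then D$$(i,i) * y$i else 0)"
    by (rule sum.cong, insert diag i, auto)
  also have "\<dots> = D$$(i,i) * y$i" using i by simp
  finally show "(D *\<^sub>v y) $ i = vec k (\<lambda>i. D$$(i,i) * y$i) $ i" using i by simp
qed (insert D, auto)

lemma quad_form:
  fixes Z P D :: "real mat"
  assumes Z: "Z \<in> carrier_mat p k" and P: "P \<in> carrier_mat k k" and D: "D \<in> carrier_mat k k"
    and diag: "\<forall>i<k. \<forall>j<k. i \<noteq> j \<longrightarrow> D$$(i,j) = 0"
    and G: "transpose_mat Z * Z = P * D * transpose_mat P"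
    and x: "x \<in> carrier_vec k"
  shows "(Z *\<^sub>v x) \<bullet> (Z *\<^sub>v x) = (\<Sum>i\<in>{0..<k}. D$$(i,i) * ((transpose_mat P *\<^sub>v x)$i)^2)"
proof -
  define y where "y = transpose_mat P *\<^sub>v x"
  have y: "y \<in> carrier_vec k" unfolding y_def using P x by simp
  have Zx: "Z *\<^sub>v x \<in> carrier_vec p" using Z x by simp
  have "(Z *\<^sub>v x) \<bullet> (Z *\<^sub>v x) = (transpose_mat Z *\<^sub>v (Z *\<^sub>v x)) \<bullet> x"
    using transpose_vec_mult_scalar[OF Z x Zx] by simp
  also have "transpose_mat Z *\<^sub>v (Z *\<^sub>v x) = (transpose_mat Z * Z) *\<^sub>v x"
    using Z x by simp
  also have "\<dots> = P *\<^sub>v (D *\<^sub>v y)" unfolding G y_def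
  proof -
    have "P * D * transpose_mat P *\<^sub>v x = (P * D) *\<^sub>v (transpose_mat P *\<^sub>v x)"
      by (rule assoc_mult_mat_vec, insert P D x, auto)
    also have "\<dots> = P *\<^sub>v (D *\<^sub>v (transpose_mat P *\<^sub>v x))"
      by (rule assoc_mult_mat_vec, insert P D x, auto)
    finally show "P * D * transpose_mat P *\<^sub>v x = P *\<^sub>v (D *\<^sub>v (transpose_mat P *\<^sub>v x))" .
  qed
  also have "(P *\<^sub>v (D *\<^sub>v y)) \<bullet> x = x \<bullet> (P *\<^sub>v (D *\<^sub>v y))"
    by (rule comm_scalar_prod[of _ k], insert P D y x, auto)
  also have "\<dots> = y \<bullet> (D *\<^sub>v y)"
    using transpose_vec_mult_scalar[OF P, of "D *\<^sub>v y" x] D y x by (simp add: y_def)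
  also have "\<dots> = (\<Sum>i\<in>{0..<k}. D$$(i,i) * (y$i)^2)"
    unfolding diag_mult_vec[OF D diag y] scalar_prod_def
    by (rule sum.cong, auto simp: power2_eq_square)
  finally show ?thesis unfolding y_def .
qed

lemma orth_preserves:
  fixes P :: "real mat"
  assumes P: "orth_mat P k" and x: "x \<in> carrier_vec k"
  shows "(transpose_mat P *\<^sub>v x) \<bullet> (transpose_mat P *\<^sub>v x) = x \<bullet> x"
proof -
  have Pc: "P \<in> carrier_mat k k" using P unfolding orth_mat_def by auto
  have "(transpose_mat P *\<^sub>v x) \<bullet> (transpose_mat P *\<^sub>v x) = x \<bullet> (P *\<^sub>v (transpose_mat P *\<^sub>v x))"
    using transpose_vec_mult_scalar[OF Pc, of "transpose_mat P *\<^sub>v x" x] Pc x by simp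
  also have "P *\<^sub>v (transpose_mat P *\<^sub>v x) = (P * transpose_mat P) *\<^sub>v x" using Pc x by simp
  also have "\<dots> = x" unfolding orth_right[OF P] using x by simp
  finally show ?thesis .
qed

lemma SN:
  fixes Z P D :: "real mat"
  assumes Z: "Z \<in> carrier_mat p k" and k: "0 < k" and P: "orth_mat P k" and D: "D \<in> carrier_mat k k"
    and diag: "\<forall>i<k. \<forall>j<k. i \<noteq> j \<longrightarrow> D$$(i,j) = 0"
    and G: "transpose_mat Z * Z = P * D * transpose_mat P"
  shows "(\<forall>i<k. 0 \<le> D$$(i,i)) \<and> spec_norm Z = sqrt (Max ((\<lambda>i. D$$(i,i)) ` {..<k}))
    \<and> (\<forall>x \<in> carrier_vec k. (Z *\<^sub>v x) \<bullet> (Z *\<^sub>v x) \<le> Max ((\<lambda>i. D$$(i,i)) ` {..<k}) * (x \<bullet> x))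
    \<and> (\<exists>i<k. D$$(i,i) = Max ((\<lambda>i. D$$(i,i)) ` {..<k}))"
proof -
  have Pc: "P \<in> carrier_mat k k" and PP: "transpose_mat P * P = 1\<^sub>m k" using P unfolding orth_mat_def by auto
  define dm where "dm = Max ((\<lambda>i. D$$(i,i)) ` {..<k})"
  have fin: "finite ((\<lambda>i. D$$(i,i)) ` {..<k})" "(\<lambda>i. D$$(i,i)) ` {..<k} \<noteq> {}" using k by auto
  have dle: "\<And>i. i < k \<Longrightarrow> D$$(i,i) \<le> dm" unfolding dm_def using fin by simp
  obtain im where im: "im < k" "D$$(im,im) = dm" unfolding dm_def using Max_in[OF fin] by auto
  note Q = quad_form[OF Z Pc D diag G]
  have Pe: "transpose_mat P *\<^sub>v (P *\<^sub>v unit_vec k i) = unit_vec k i" for i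
  proof -
    have "transpose_mat P *\<^sub>v (P *\<^sub>v unit_vec k i) = (transpose_mat P * P) *\<^sub>v unit_vec k i"
      using Pc by simp
    thus ?thesis unfolding PP by simp
  qed
  have qe: "(Z *\<^sub>v (P *\<^sub>v unit_vec k i)) \<bullet> (Z *\<^sub>v (P *\<^sub>v unit_vec k i)) = D$$(i,i)" if i: "i < k" for i
  proof -
    have "(Z *\<^sub>v (P *\<^sub>v unit_vec k i)) \<bullet> (Z *\<^sub>v (P *\<^sub>v unit_vec k i))
        = (\<Sum>j\<in>{0..<k}. D$$(j,j) * ((unit_vec k i)$j)^2)"
      using Q[of "P *\<^sub>v unit_vec k i"] Pc unfolding Pe by simp
    also have "\<dots> = (\<Sum>j\<in>{0..<k}. if j = i then D$$(i,i) else 0)"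
      by (rule sum.cong, auto simp: unit_vec_def)
    finally show ?thesis using i by simp
  qed
  have nonneg: "\<forall>i<k. 0 \<le> D$$(i,i)"
    using qe self_scalar_nonneg by metis
  have bound: "(Z *\<^sub>v x) \<bullet> (Z *\<^sub>v x) \<le> dm * (x \<bullet> x)" if x: "x \<in> carrier_vec k" for x
  proof -
    define y where "y = transpose_mat P *\<^sub>v x"
    have y: "y \<in> carrier_vec k" unfolding y_def using Pc x by simp
    have "(Z *\<^sub>v x) \<bullet> (Z *\<^sub>v x) = (\<Sum>i\<in>{0..<k}. D$$(i,i) * (y$i)^2)" unfolding y_def by (rule Q[OF x])
    also have "\<dots> \<le> (\<Sum>i\<in>{0..<k}. dm * (y$i)^2)"
      by (rule sum_mono, rule mult_right_mono, insert dle, auto)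
    also have "\<dots> = dm * (y \<bullet> y)" using y
      by (simp add: scalar_prod_def sum_distrib_left power2_eq_square)
    also have "y \<bullet> y = x \<bullet> x" unfolding y_def by (rule orth_preserves[OF P x])
    finally show ?thesis .
  qed
  have dm0: "0 \<le> dm" using nonneg im by auto
  define X where "X = {vnorm (Z *\<^sub>v x) | x. x \<in> carrier_vec (dim_col Z) \<and> vnorm x = 1}"
  define x0 where "x0 = P *\<^sub>v unit_vec k im"
  have x0: "x0 \<in> carrier_vec k" unfolding x0_def using Pc by simp
  have "x0 \<bullet> x0 = 1"
    using orth_preserves[OF P x0] unfolding x0_def Pe using im by simp
  hence "vnorm x0 = 1" unfolding vnorm_def by simp
  moreover have "vnorm (Z *\<^sub>v x0) = sqrt dm" unfolding vnorm_def x0_def qe[OF im(1)] im ..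
  ultimately have inX: "sqrt dm \<in> X" unfolding X_def using x0 Z by force
  have ub: "\<forall>y\<in>X. y \<le> sqrt dm"
  proof
    fix y assume "y \<in> X"
    then obtain x where x: "x \<in> carrier_vec k" "vnorm x = 1" and y: "y = vnorm (Z *\<^sub>v x)"
      unfolding X_def using Z by auto
    have "x \<bullet> x = 1" using x(2) self_scalar_nonneg[of x] unfolding vnorm_def by simp
    thus "y \<le> sqrt dm" unfolding y vnorm_def using bound[OF x(1)] by simp
  qed
  have "spec_norm Z = sqrt dm" unfolding spec_norm_def X_def[symmetric]
    by (rule cSup_eq_maximum[OF inX], insert ub, auto)
  thus ?thesis using nonneg bound im unfolding dm_def by blast
qed



lemma gram_spectral:
  fixes Z :: "real mat"
  assumes Z: "Z \<in> carrier_mat p k"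
  shows "\<exists>P D. orth_mat P k \<and> D \<in> carrier_mat k k \<and> (\<forall>i<k. \<forall>j<k. i \<noteq> j \<longrightarrow> D$$(i,j) = 0)
     \<and> transpose_mat Z * Z = P * D * transpose_mat P"
proof -
  have G: "transpose_mat Z * Z \<in> carrier_mat k k" using Z by simp
  have "transpose_mat (transpose_mat Z * Z) = transpose_mat Z * Z"
    using transpose_mult[of "transpose_mat Z" k p Z k] Z by simp
  from spectral[OF G this] show ?thesis by blast
qed

lemma spec_norm_bound:
  fixes Z :: "real mat"
  assumes Z: "Z \<in> carrier_mat p k" and k: "0 < k"
  shows "0 \<le> spec_norm Z \<and> (\<forall>x\<in>carrier_vec k. (Z *\<^sub>v x) \<bullet> (Z *\<^sub>v x) \<le> (spec_norm Z)^2 * (x \<bullet> x))"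
proof -
  obtain P D where P: "orth_mat P k" and D: "D \<in> carrier_mat k k"
    and diag: "\<forall>i<k. \<forall>j<k. i \<noteq> j \<longrightarrow> D$$(i,j) = 0" and G: "transpose_mat Z * Z = P * D * transpose_mat P"
    using gram_spectral[OF Z] by blast
  from SN[OF Z k P D diag G] obtain im where
    nonneg: "\<forall>i<k. 0 \<le> D$$(i,i)" and sn: "spec_norm Z = sqrt (Max ((\<lambda>i. D$$(i,i)) ` {..<k}))"
    and bd: "\<forall>x\<in>carrier_vec k. (Z *\<^sub>v x) \<bullet> (Z *\<^sub>v x) \<le> Max ((\<lambda>i. D$$(i,i)) ` {..<k}) * (x \<bullet> x)"
    and im: "im < k" "D$$(im,im) = Max ((\<lambda>i. D$$(i,i)) ` {..<k})" by blast
  have "0 \<le> Max ((\<lambda>i. D$$(i,i)) ` {..<k})" using nonneg im by metis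
  thus ?thesis using sn bd by simp
qed

lemma spec_norm_le_T:
  fixes Z :: "real mat"
  assumes Z: "Z \<in> carrier_mat p k" and p: "0 < p" and k: "0 < k"
  shows "spec_norm Z \<le> spec_norm (transpose_mat Z)"
proof -
  obtain P D where P: "orth_mat P k" and D: "D \<in> carrier_mat k k"
    and diag: "\<forall>i<k. \<forall>j<k. i \<noteq> j \<longrightarrow> D$$(i,j) = 0" and G: "transpose_mat Z * Z = P * D * transpose_mat P"
    using gram_spectral[OF Z] by blast
  define dm where "dm = Max ((\<lambda>i. D$$(i,i)) ` {..<k})"
  from SN[OF Z k P D diag G, folded dm_def] obtain im where
    nonneg: "\<forall>i<k. 0 \<le> D$$(i,i)" and sn: "spec_norm Z = sqrt dm"
    and im: "im < k" "D$$(im,im) = dm" by blast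
  have Pc: "P \<in> carrier_mat k k" and PP: "transpose_mat P * P = 1\<^sub>m k" using P unfolding orth_mat_def by auto
  define e where "e = (unit_vec k im :: real vec)"
  have e: "e \<in> carrier_vec k" unfolding e_def by simp
  define x where "x = P *\<^sub>v e"
  have x: "x \<in> carrier_vec k" unfolding x_def using Pc e by simp
  have Px: "transpose_mat P *\<^sub>v x = e"
  proof -
    have "transpose_mat P *\<^sub>v x = (transpose_mat P * P) *\<^sub>v e" unfolding x_def using Pc e by simp
    thus ?thesis unfolding PP using e by simp
  qed
  have xx: "x \<bullet> x = 1" using orth_preserves[OF P x] unfolding Px e_def using im by simp
  have De: "D *\<^sub>v e = dm \<cdot>\<^sub>v e"
    unfolding diag_mult_vec[OF D diag e] by (rule eq_vecI, insert im, auto simp: e_def)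
  have ZZx: "transpose_mat Z *\<^sub>v (Z *\<^sub>v x) = dm \<cdot>\<^sub>v x"
  proof -
    have "transpose_mat Z *\<^sub>v (Z *\<^sub>v x) = (transpose_mat Z * Z) *\<^sub>v x" using Z x by simp
    also have "\<dots> = (P * D) *\<^sub>v (transpose_mat P *\<^sub>v x)" unfolding G
      by (rule assoc_mult_mat_vec, insert Pc D x, auto)
    also have "\<dots> = P *\<^sub>v (D *\<^sub>v e)" unfolding Px by (rule assoc_mult_mat_vec, insert Pc D e, auto)
    also have "\<dots> = dm \<cdot>\<^sub>v x" unfolding De x_def by (rule mult_mat_vec[OF Pc e])
    finally show ?thesis .
  qed
  define y where "y = Z *\<^sub>v x"
  have y: "y \<in> carrier_vec p" unfolding y_def using Z x by simp
  have yy: "y \<bullet> y = dm"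
  proof -
    have "y \<bullet> y = (transpose_mat Z *\<^sub>v y) \<bullet> x" unfolding y_def
      using transpose_vec_mult_scalar[OF Z x, of "Z *\<^sub>v x"] Z x by simp
    also have "\<dots> = dm" unfolding y_def ZZx using x xx by simp
    finally show ?thesis .
  qed
  have ZT: "transpose_mat Z \<in> carrier_mat k p" using Z by simp
  from spec_norm_bound[OF ZT p] y have b0: "0 \<le> spec_norm (transpose_mat Z)"
    and bd: "(transpose_mat Z *\<^sub>v y) \<bullet> (transpose_mat Z *\<^sub>v y) \<le> (spec_norm (transpose_mat Z))^2 * (y \<bullet> y)"
    by auto
  have "(transpose_mat Z *\<^sub>v y) \<bullet> (transpose_mat Z *\<^sub>v y) = dm * dm"
    unfolding y_def ZZx using x xx by simp
  hence le: "dm * dm \<le> (spec_norm (transpose_mat Z))^2 * dm" using bd yy by simp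
  have dm0: "0 \<le> dm" using nonneg im by metis
  show ?thesis
  proof (cases "dm = 0")
    case True
    thus ?thesis using sn b0 by simp
  next
    case False
    hence "dm > 0" using dm0 by simp
    hence "dm \<le> (spec_norm (transpose_mat Z))^2" using le by simp
    hence "sqrt dm \<le> sqrt ((spec_norm (transpose_mat Z))^2)" by (rule real_sqrt_le_mono)
    thus ?thesis using sn b0 by simp
  qed
qed

lemma spec_norm_T:
  fixes Z :: "real mat"
  assumes Z: "Z \<in> carrier_mat p k" and p: "0 < p" and k: "0 < k"
  shows "spec_norm (transpose_mat Z) = spec_norm Z"
proof -
  have "spec_norm (transpose_mat Z) \<le> spec_norm (transpose_mat (transpose_mat Z))"
    by (rule spec_norm_le_T[of _ k p], insert Z p k, auto)
  thus ?thesis using spec_norm_le_T[OF Z p k] by simp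
qed



lemma sub_from_sum:
  fixes X Y C :: "real mat"
  assumes "X \<in> carrier_mat a b" "Y \<in> carrier_mat a b" "C \<in> carrier_mat a b" "X + Y = C"
  shows "Y = C - X"
proof (rule eq_matI)
  fix i j assume "i < dim_row (C - X)" "j < dim_col (C - X)"
  hence ij: "i < a" "j < b" using assms by auto
  have "X $$ (i,j) + Y $$ (i,j) = C $$ (i,j)" using arg_cong[OF assms(4), of "\<lambda>M. M $$ (i,j)"] ij assms(1,2) by simp
  thus "Y $$ (i,j) = (C - X) $$ (i,j)" using ij assms(1,3) by simp
qed (insert assms, auto)

lemma one_minus_conj:
  fixes B G :: "real mat"
  assumes B: "orth_mat B r" and G: "G \<in> carrier_mat r r"
  shows "1\<^sub>m r - B * G * transpose_mat B = B * (1\<^sub>m r - G) * transpose_mat B"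
proof -
  have Bc: "B \<in> carrier_mat r r" using B unfolding orth_mat_def by auto
  have "B * (1\<^sub>m r - G) = B - B * G" using mult_minus_distrib_mat[OF Bc _ G, of "1\<^sub>m r"] Bc by simp
  hence "B * (1\<^sub>m r - G) * transpose_mat B = (B - B * G) * transpose_mat B" by simp
  also have "\<dots> = B * transpose_mat B - B * G * transpose_mat B"
    using Bc G by (simp add: minus_mult_distrib_mat[of _ r r])
  also have "B * transpose_mat B = 1\<^sub>m r" by (rule orth_right[OF B])
  finally show ?thesis by simp
qed

lemma conj_outer:
  fixes R J :: "real mat"
  assumes R: "R \<in> carrier_mat d d" and J: "J \<in> carrier_mat d k"
  shows "(R * J) * transpose_mat (R * J) = R * (J * transpose_mat J) * transpose_mat R"
proof -
  have TJ: "transpose_mat J \<in> carrier_mat k d" and TR: "transpose_mat R \<in> carrier_mat d d" using R J by auto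
  have "(R * J) * transpose_mat (R * J) = (R * J) * (transpose_mat J * transpose_mat R)"
    using transpose_mult[OF R J] by simp
  also have "\<dots> = R * (J * (transpose_mat J * transpose_mat R))"
    by (rule assoc_mult_mat[OF R J], insert TJ TR, auto)
  also have "J * (transpose_mat J * transpose_mat R) = (J * transpose_mat J) * transpose_mat R"
    by (rule assoc_mult_mat[OF J TJ TR, symmetric])
  also have "R * ((J * transpose_mat J) * transpose_mat R) = (R * (J * transpose_mat J)) * transpose_mat R"
    by (rule assoc_mult_mat[OF R _ TR, symmetric], insert J TJ, auto)
  finally show ?thesis .
qed

lemma assoc4:
  fixes A B D C :: "real mat"
  assumes A: "A \<in> carrier_mat k d" and B: "B \<in> carrier_mat d a" and D: "D \<in> carrier_mat a d"
    and C: "C \<in> carrier_mat d l"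
  shows "A * (B * D) * C = (A * B) * (D * C)"
proof -
  have "A * (B * D) * C = A * ((B * D) * C)" by (rule assoc_mult_mat[OF A _ C], insert B D, auto)
  also have "(B * D) * C = B * (D * C)" by (rule assoc_mult_mat[OF B D C])
  also have "A * (B * (D * C)) = (A * B) * (D * C)" by (rule assoc_mult_mat[OF A B, symmetric], insert D C, auto)
  finally show ?thesis .
qed

lemma sandwich_sum:
  fixes A B1 B2 C :: "real mat"
  assumes A: "A \<in> carrier_mat k d" and B1: "B1 \<in> carrier_mat d a" and B2: "B2 \<in> carrier_mat d b"
    and C: "C \<in> carrier_mat d l"
  shows "A * (B1 * transpose_mat B1 + B2 * transpose_mat B2) * C
     = (A * B1) * (transpose_mat B1 * C) + (A * B2) * (transpose_mat B2 * C)"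
proof -
  have "A * (B1 * transpose_mat B1 + B2 * transpose_mat B2) = A * (B1 * transpose_mat B1) + A * (B2 * transpose_mat B2)"
    by (rule mult_add_distrib_mat[OF A], insert B1 B2, auto)
  hence "A * (B1 * transpose_mat B1 + B2 * transpose_mat B2) * C = (A * (B1 * transpose_mat B1) + A * (B2 * transpose_mat B2)) * C"
    by simp
  also have "\<dots> = A * (B1 * transpose_mat B1) * C + A * (B2 * transpose_mat B2) * C"
    by (rule add_mult_distrib_mat[OF _ _ C], insert A B1 B2, auto)
  also have "\<dots> = (A * B1) * (transpose_mat B1 * C) + (A * B2) * (transpose_mat B2 * C)"
    using assoc4[OF A B1 _ C, of "transpose_mat B1"] assoc4[OF A B2 _ C, of "transpose_mat B2"] B1 B2 by simp
  finally show ?thesis .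
qed

lemma pair:
  fixes P Q :: "real mat"
  assumes P: "orth_mat P d" and Q: "orth_mat Q d" and r: "0 < r" "r < d"
  shows "spec_norm (sin_Theta (blk P 0 0 d r) (blk Q 0 0 d r))
           = spec_norm (transpose_mat (blk P 0 0 d r) * blk Q 0 r d (d - r))
       \<and> spec_norm (sin_Theta (blk P 0 0 d r) (blk Q 0 0 d r))
           = spec_norm (transpose_mat (blk P 0 r d (d - r)) * blk Q 0 0 d r)"
proof -
  have Pc: "P \<in> carrier_mat d d" and PP: "transpose_mat P * P = 1\<^sub>m d" using P unfolding orth_mat_def by auto
  have Qc: "Q \<in> carrier_mat d d" and QQ: "transpose_mat Q * Q = 1\<^sub>m d" using Q unfolding orth_mat_def by auto
  have PP': "P * transpose_mat P = 1\<^sub>m d" by (rule orth_right[OF P])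
  have QQ': "Q * transpose_mat Q = 1\<^sub>m d" by (rule orth_right[OF Q])
  define J1 where "J1 = sel d 0 r"
  define J2 where "J2 = sel d r (d - r)"
  have J1: "J1 \<in> carrier_mat d r" and J2: "J2 \<in> carrier_mat d (d - r)" unfolding J1_def J2_def by auto
  have J11: "transpose_mat J1 * J1 = 1\<^sub>m r" unfolding J1_def by (rule sel_TT, insert r, auto)
  have J22: "transpose_mat J2 * J2 = 1\<^sub>m (d - r)" unfolding J2_def by (rule sel_TT, insert r, auto)
  have Jsum: "J1 * transpose_mat J1 + J2 * transpose_mat J2 = 1\<^sub>m d" unfolding J1_def J2_def
    by (rule sel_sum, insert r, auto)
  define P1 where "P1 = blk P 0 0 d r"
  define P2 where "P2 = blk P 0 r d (d - r)"
  define Q1 where "Q1 = blk Q 0 0 d r"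
  define Q2 where "Q2 = blk Q 0 r d (d - r)"
  have P1J: "P1 = P * J1" unfolding P1_def J1_def by (rule blk_sel[OF Pc], insert r, auto)
  have P2J: "P2 = P * J2" unfolding P2_def J2_def by (rule blk_sel[OF Pc], insert r, auto)
  have Q1J: "Q1 = Q * J1" unfolding Q1_def J1_def by (rule blk_sel[OF Qc], insert r, auto)
  have Q2J: "Q2 = Q * J2" unfolding Q2_def J2_def by (rule blk_sel[OF Qc], insert r, auto)
  have P1: "P1 \<in> carrier_mat d r" and P2: "P2 \<in> carrier_mat d (d - r)"
    and Q1: "Q1 \<in> carrier_mat d r" and Q2: "Q2 \<in> carrier_mat d (d - r)"
    unfolding P1J P2J Q1J Q2J using Pc Qc J1 J2 by auto
  have gen_TT: "transpose_mat (R * J) * (R * J) = transpose_mat J * J"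
    if R: "R \<in> carrier_mat d d" "transpose_mat R * R = 1\<^sub>m d" and J: "J \<in> carrier_mat d k" for R J :: "real mat" and k
  proof -
    have "transpose_mat (R * J) * (R * J) = (transpose_mat J * transpose_mat R) * (R * J)"
      using transpose_mult[OF R(1) J] by simp
    also have "\<dots> = transpose_mat J * (transpose_mat R * (R * J))"
      by (rule assoc_mult_mat[of _ k d _ d _ k], insert R J, auto)
    also have "transpose_mat R * (R * J) = (transpose_mat R * R) * J"
      by (rule assoc_mult_mat[symmetric, of _ d d _ d _ k], insert R J, auto)
    finally show ?thesis unfolding R(2) using J by simp
  qed
  have Q11: "transpose_mat Q1 * Q1 = 1\<^sub>m r" unfolding Q1J using gen_TT[OF Qc QQ J1] J11 by simp
  have P11: "transpose_mat P1 * P1 = 1\<^sub>m r" unfolding P1J using gen_TT[OF Pc PP J1] J11 by simp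
  have gen_sum: "R1 * transpose_mat R1 + R2 * transpose_mat R2 = 1\<^sub>m d"
    if R: "R \<in> carrier_mat d d" "R * transpose_mat R = 1\<^sub>m d" and R1: "R1 = R * J1" and R2: "R2 = R * J2" for R R1 R2 :: "real mat"
  proof -
    have "R1 * transpose_mat R1 + R2 * transpose_mat R2
        = R * (J1 * transpose_mat J1) * transpose_mat R + R * (J2 * transpose_mat J2) * transpose_mat R"
      unfolding R1 R2 conj_outer[OF R(1) J1] conj_outer[OF R(1) J2] ..
    also have "\<dots> = (R * (J1 * transpose_mat J1) + R * (J2 * transpose_mat J2)) * transpose_mat R"
      by (rule add_mult_distrib_mat[symmetric, of _ d d], insert R J1 J2, auto)
    also have "R * (J1 * transpose_mat J1) + R * (J2 * transpose_mat J2) = R * (J1 * transpose_mat J1 + J2 * transpose_mat J2)"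
      by (rule mult_add_distrib_mat[symmetric, of _ d d], insert R J1 J2, auto)
    also have "R * (J1 * transpose_mat J1 + J2 * transpose_mat J2) * transpose_mat R = 1\<^sub>m d"
    proof -
      have Rone: "R * 1\<^sub>m d = R" using R by simp
      have "R * (J1 * transpose_mat J1 + J2 * transpose_mat J2) * transpose_mat R = R * transpose_mat R"
        by (simp only: Jsum Rone)
      thus ?thesis using R(2) by simp
    qed
    finally show ?thesis .
  qed
  have Psum: "P1 * transpose_mat P1 + P2 * transpose_mat P2 = 1\<^sub>m d" by (rule gen_sum[OF Pc PP' P1J P2J])
  have Qsum: "Q1 * transpose_mat Q1 + Q2 * transpose_mat Q2 = 1\<^sub>m d" by (rule gen_sum[OF Qc QQ' Q1J Q2J])
  define M where "M = transpose_mat P1 * Q1"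
  have Mc: "M \<in> carrier_mat r r" unfolding M_def using P1 Q1 by simp
  define S0 where "S0 = (SOME S. \<exists>U V. is_full_svd M U S V)"
  have "\<exists>S U V. is_full_svd M U S V" using svd_square_exists[OF Mc] by blast
  hence "\<exists>U V. is_full_svd M U S0 V" unfolding S0_def by (rule someI_ex)
  then obtain A B where svd: "is_full_svd M A S0 B" by blast
  have dM: "dim_row M = r" "dim_col M = r" using Mc by auto
  have A: "orth_mat A r" and B: "orth_mat B r" and S0: "S0 \<in> carrier_mat r r"
    and S0d: "rdiag S0" and Meq: "M = A * S0 * transpose_mat B"
    using svd unfolding is_full_svd_def dM rdiag_def by auto
  have Ac: "A \<in> carrier_mat r r" and AA: "transpose_mat A * A = 1\<^sub>m r" using A unfolding orth_mat_def by auto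
  have Bc: "B \<in> carrier_mat r r" and BB: "transpose_mat B * B = 1\<^sub>m r" using B unfolding orth_mat_def by auto
  define G where "G = mat r r (\<lambda>(i,j). if i = j then (sval S0 i)^2 else 0)"
  have G: "G \<in> carrier_mat r r" unfolding G_def by simp
  have G1: "transpose_mat S0 * S0 = G" unfolding G_def by (rule diag_gram[OF S0 S0d])
  have G2: "S0 * transpose_mat S0 = G" unfolding G_def by (rule diag_gram'[OF S0 S0d])
  define DD where "DD = 1\<^sub>m r - G"
  have DD: "DD \<in> carrier_mat r r" unfolding DD_def using G by (simp add: minus_carrier_mat)
  have DDd: "\<forall>i<r. \<forall>j<r. i \<noteq> j \<longrightarrow> DD$$(i,j) = 0" unfolding DD_def G_def by auto
  have DDii: "\<And>i. i < r \<Longrightarrow> DD$$(i,i) = 1 - (sval S0 i)^2" unfolding DD_def G_def by auto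
  have MM: "transpose_mat M * M = B * G * transpose_mat B"
  proof -
    have TM: "transpose_mat M = B * transpose_mat S0 * transpose_mat A"
      unfolding Meq using Ac S0 Bc
      by (simp add: transpose_mult[of _ r r _ r] assoc_mult_mat[of _ r r _ r _ r])
    have "transpose_mat M * M = B * transpose_mat S0 * (transpose_mat A * A) * S0 * transpose_mat B"
      unfolding TM unfolding Meq using Ac S0 Bc by (simp add: assoc_mult_mat[of _ r r _ r _ r])
    also have "\<dots> = B * (transpose_mat S0 * S0) * transpose_mat B"
      unfolding AA using Ac S0 Bc by (simp add: assoc_mult_mat[of _ r r _ r _ r])
    finally show ?thesis unfolding G1 .
  qed
  have MM': "M * transpose_mat M = A * G * transpose_mat A"
  proof -
    have TM: "transpose_mat M = B * transpose_mat S0 * transpose_mat A"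
      unfolding Meq using Ac S0 Bc
      by (simp add: transpose_mult[of _ r r _ r] assoc_mult_mat[of _ r r _ r _ r])
    have "M * transpose_mat M = A * S0 * (transpose_mat B * B) * transpose_mat S0 * transpose_mat A"
      unfolding TM unfolding Meq using Ac S0 Bc by (simp add: assoc_mult_mat[of _ r r _ r _ r])
    also have "\<dots> = A * (S0 * transpose_mat S0) * transpose_mat A"
      unfolding BB using Ac S0 Bc by (simp add: assoc_mult_mat[of _ r r _ r _ r])
    finally show ?thesis unfolding G2 .
  qed
  define Y where "Y = transpose_mat P2 * Q1"
  have Y: "Y \<in> carrier_mat (d - r) r" unfolding Y_def using P2 Q1 by simp
  have YY: "transpose_mat Y * Y = B * DD * transpose_mat B"
  proof -
    have TY: "transpose_mat Y = transpose_mat Q1 * P2" unfolding Y_def using P2 Q1 transpose_mult[of "transpose_mat P2" "d - r" d Q1 r] by simp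
    have TMx: "transpose_mat M = transpose_mat Q1 * P1" unfolding M_def using P1 Q1 transpose_mult[of "transpose_mat P1" r d Q1 r] by simp
    have "transpose_mat M * M + transpose_mat Y * Y = transpose_mat Q1 * (P1 * transpose_mat P1 + P2 * transpose_mat P2) * Q1"
      unfolding TY TMx unfolding M_def Y_def
      by (rule sandwich_sum[symmetric], insert P1 P2 Q1, auto)
    also have "\<dots> = 1\<^sub>m r" unfolding Psum using Q1 Q11 by simp
    finally have "transpose_mat Y * Y = 1\<^sub>m r - transpose_mat M * M"
      by (intro sub_from_sum[of _ r r], insert Mc Y, auto)
    thus ?thesis unfolding MM DD_def using one_minus_conj[OF B G] by simp
  qed
  define X where "X = transpose_mat Q2 * P1"
  have X: "X \<in> carrier_mat (d - r) r" unfolding X_def using P1 Q2 by simp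
  have XX: "transpose_mat X * X = A * DD * transpose_mat A"
  proof -
    have TX: "transpose_mat X = transpose_mat P1 * Q2" unfolding X_def using P1 Q2 transpose_mult[of "transpose_mat Q2" "d - r" d P1 r] by simp
    have TMx: "transpose_mat M = transpose_mat Q1 * P1" unfolding M_def using P1 Q1 transpose_mult[of "transpose_mat P1" r d Q1 r] by simp
    have "M * transpose_mat M + transpose_mat X * X = transpose_mat P1 * (Q1 * transpose_mat Q1 + Q2 * transpose_mat Q2) * P1"
      unfolding TX TMx unfolding M_def X_def
      by (rule sandwich_sum[symmetric], insert P1 Q2 Q1, auto)
    also have "\<dots> = 1\<^sub>m r" unfolding Qsum using P1 P11 by simp
    finally have "transpose_mat X * X = 1\<^sub>m r - M * transpose_mat M"
      by (intro sub_from_sum[of _ r r], insert Mc X, auto)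
    thus ?thesis unfolding MM' DD_def using one_minus_conj[OF A G] by simp
  qed
  have dr: "0 < d - r" using r by simp
  define dm where "dm = Max ((\<lambda>i. DD$$(i,i)) ` {..<r})"
  from SN[OF Y r(1) B DD DDd YY, folded dm_def] have
    nonneg: "\<forall>i<r. 0 \<le> DD$$(i,i)" and snY: "spec_norm Y = sqrt dm" by auto
  from SN[OF X r(1) A DD DDd XX, folded dm_def] have snX: "spec_norm X = sqrt dm" by auto
  have XT: "transpose_mat P1 * Q2 = transpose_mat X" unfolding X_def
    using transpose_mult[of "transpose_mat Q2" "d - r" d P1 r] P1 Q2 by simp
  have snXT: "spec_norm (transpose_mat P1 * Q2) = sqrt dm" unfolding XT spec_norm_T[OF X dr r(1)] snX ..
  define Z where "Z = sin_Theta P1 Q1"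
  have dP1: "dim_col P1 = r" using P1 by simp
  have Zeq: "Z = mat r r (\<lambda>(i,j). if i = j then sqrt (1 - (sval S0 i)^2) else 0)"
    unfolding Z_def sin_Theta_def dP1 singular_values_def M_def[symmetric] S0_def[symmetric] ..
  have Z: "Z \<in> carrier_mat r r" unfolding Zeq by simp
  have Zd: "rdiag Z" unfolding Zeq rdiag_def by auto
  have ZZ: "transpose_mat Z * Z = 1\<^sub>m r * DD * transpose_mat (1\<^sub>m r)"
  proof -
    have "transpose_mat Z * Z = mat r r (\<lambda>(i,j). if i = j then (sval Z i)^2 else 0)"
      by (rule diag_gram[OF Z Zd])
    also have "\<dots> = DD"
    proof (rule eq_matI)
      fix i j assume "i < dim_row DD" "j < dim_col DD"
      hence ij: "i < r" "j < r" using DD by auto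
      show "mat r r (\<lambda>(i,j). if i = j then (sval Z i)^2 else 0) $$ (i,j) = DD $$ (i,j)"
      proof (cases "i = j")
        case True
        have "(sval Z i)^2 = 1 - (sval S0 i)^2"
          using ij nonneg DDii[of i] unfolding sval_def Zeq by auto
        thus ?thesis using True ij DDii by simp
      next
        case False
        thus ?thesis using ij DDd by simp
      qed
    qed (insert DD, auto)
    finally show ?thesis using DD by simp
  qed
  have o1: "orth_mat (1\<^sub>m r) r" unfolding orth_mat_def by simp
  from SN[OF Z r(1) o1 DD DDd ZZ, folded dm_def] have snZ: "spec_norm Z = sqrt dm" by auto
  show ?thesis using snZ snXT snY unfolding Z_def Y_def P1_def P2_def Q1_def Q2_def by simp
qed



lemma diag_sel_right:
  assumes S: "S \<in> carrier_mat n m" and d: "rdiag S" and ca: "c + a \<le> n" and cb: "c + b \<le> m"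
    and cond: "c + a = n \<or> b \<le> a"
  shows "S * sel m c b = sel n c a * blk S c c a b"
proof (rule eq_matI)
  fix i j assume "i < dim_row (sel n c a * blk S c c a b)" "j < dim_col (sel n c a * blk S c c a b)"
  hence i: "i < n" and j: "j < b" by (auto simp: blk_def)
  have "(S * sel m c b) $$ (i,j) = (\<Sum>l\<in>{0..<m}. S $$ (i,l) * (if l = j + c then 1 else 0))"
    using S i j by (simp add: scalar_prod_def sel_def)
  also have "\<dots> = (\<Sum>l\<in>{0..<m}. if l = j + c then S $$ (i,l) else 0)" by (rule sum.cong, auto)
  also have "\<dots> = S $$ (i, j + c)" using j cb by (subst sum_delta_nat, auto)
  finally have L: "(S * sel m c b) $$ (i,j) = S $$ (i, j + c)" .
  have "(sel n c a * blk S c c a b) $$ (i,j) = (\<Sum>l\<in>{0..<a}. (if i = l + c then 1 else 0) * S $$ (l + c, j + c))"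
    using S i j by (simp add: scalar_prod_def sel_def blk_def)
  also have "\<dots> = (\<Sum>l\<in>{0..<a}. if l + c = i then S $$ (i, j + c) else 0)" by (rule sum.cong, auto)
  finally have R: "(sel n c a * blk S c c a b) $$ (i,j) = (\<Sum>l\<in>{0..<a}. if l + c = i then S $$ (i, j + c) else 0)" .
  show "(S * sel m c b) $$ (i,j) = (sel n c a * blk S c c a b) $$ (i,j)"
  proof (cases "c \<le> i \<and> i < c + a")
    case True
    have "(\<Sum>l\<in>{0..<a}. if l + c = i then S $$ (i, j + c) else 0) = (\<Sum>l\<in>{0..<a}. if l = i - c then S $$ (i, j + c) else 0)"
      by (rule sum.cong, insert True, auto)
    also have "\<dots> = S $$ (i, j + c)" using True by (subst sum_delta_nat, auto)
    finally show ?thesis unfolding L R by simp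
  next
    case False
    have "(\<Sum>l\<in>{0..<a}. if l + c = i then S $$ (i, j + c) else 0) = 0"
      by (rule sum.neutral, insert False, auto)
    moreover have "i \<noteq> j + c" using False cond i j by auto
    hence "S $$ (i, j + c) = 0" using d S i j cb unfolding rdiag_def by auto
    ultimately show ?thesis unfolding L R by simp
  qed
qed (insert S, auto simp: blk_def)

lemma blk_T: "c + a \<le> dim_row S \<Longrightarrow> c + b \<le> dim_col S \<Longrightarrow>
   transpose_mat (blk (transpose_mat S) c c b a) = blk S c c a b"
  by (rule eq_matI, auto simp: blk_def)

lemma diag_sel_left:
  assumes S: "S \<in> carrier_mat n m" and d: "rdiag S" and ca: "c + a \<le> n" and cb: "c + b \<le> m"
    and cond: "c + b = m \<or> a \<le> b"
  shows "transpose_mat (sel n c a) * S = blk S c c a b * transpose_mat (sel m c b)"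
proof -
  have TS: "transpose_mat S \<in> carrier_mat m n" using S by simp
  have "transpose_mat S * sel n c a = sel m c b * blk (transpose_mat S) c c b a"
    by (rule diag_sel_right[OF TS rdiag_T[OF d] cb ca cond])
  hence "transpose_mat (transpose_mat S * sel n c a) = transpose_mat (sel m c b * blk (transpose_mat S) c c b a)"
    by simp
  moreover have "transpose_mat (transpose_mat S * sel n c a) = transpose_mat (sel n c a) * S"
    using transpose_mult[OF TS sel_carrier[of n c a]] by simp
  moreover have "transpose_mat (sel m c b * blk (transpose_mat S) c c b a) = blk S c c a b * transpose_mat (sel m c b)"
    using transpose_mult[OF sel_carrier[of m c b], of "blk (transpose_mat S) c c b a" a] blk_T[of c a S b] S ca cb
    by (simp add: blk_def)
  ultimately show ?thesis by simp
qed



lemma svd_facts: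
  fixes A U S V Jn Jm Sk :: "real mat"
  assumes U: "orth_mat U n" and V: "orth_mat V m" and S: "S \<in> carrier_mat n m"
    and Aeq: "A = U * S * transpose_mat V"
    and Jn: "Jn \<in> carrier_mat n a" and Jm: "Jm \<in> carrier_mat m b" and Sk: "Sk \<in> carrier_mat a b"
    and SR: "S * Jm = Jn * Sk" and SL: "transpose_mat Jn * S = Sk * transpose_mat Jm"
  shows "A * (V * Jm) = (U * Jn) * Sk" (is ?g1)
    and "transpose_mat (U * Jn) * A = Sk * transpose_mat (V * Jm)" (is ?g2)
    and "transpose_mat A * (U * Jn) = (V * Jm) * transpose_mat Sk" (is ?g3)
    and "transpose_mat (V * Jm) * transpose_mat A = transpose_mat Sk * transpose_mat (U * Jn)" (is ?g4)
proof -
  have Uc: "U \<in> carrier_mat n n" and UU: "transpose_mat U * U = 1\<^sub>m n" using U unfolding orth_mat_def by auto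
  have Vc: "V \<in> carrier_mat m m" and VV: "transpose_mat V * V = 1\<^sub>m m" using V unfolding orth_mat_def by auto
  have TU: "transpose_mat U \<in> carrier_mat n n" and TV: "transpose_mat V \<in> carrier_mat m m" using Uc Vc by auto
  have TJn: "transpose_mat Jn \<in> carrier_mat a n" and TJm: "transpose_mat Jm \<in> carrier_mat b m" using Jn Jm by auto
  have US: "U * S \<in> carrier_mat n m" using Uc S by simp
  have VJm: "V * Jm \<in> carrier_mat m b" using Vc Jm by simp
  have UJn: "U * Jn \<in> carrier_mat n a" using Uc Jn by simp
  have A: "A \<in> carrier_mat n m" unfolding Aeq using US TV by simp
  have STV: "S * transpose_mat V \<in> carrier_mat n m" using S TV by simp
  show g1: ?g1
  proof -
    have "A * (V * Jm) = (U * S) * (transpose_mat V * (V * Jm))" unfolding Aeq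
      by (rule assoc_mult_mat[OF US TV VJm])
    also have "transpose_mat V * (V * Jm) = (transpose_mat V * V) * Jm"
      by (rule assoc_mult_mat[OF TV Vc Jm, symmetric])
    also have "\<dots> = Jm" unfolding VV using Jm by simp
    also have "(U * S) * Jm = U * (S * Jm)" by (rule assoc_mult_mat[OF Uc S Jm])
    also have "\<dots> = (U * Jn) * Sk" unfolding SR by (rule assoc_mult_mat[OF Uc Jn Sk, symmetric])
    finally show ?thesis .
  qed
  show g2: ?g2
  proof -
    have "A = U * (S * transpose_mat V)" unfolding Aeq by (rule assoc_mult_mat[OF Uc S TV])
    hence "transpose_mat (U * Jn) * A = (transpose_mat Jn * transpose_mat U) * (U * (S * transpose_mat V))"
      using transpose_mult[OF Uc Jn] by simp
    also have "\<dots> = transpose_mat Jn * (transpose_mat U * (U * (S * transpose_mat V)))"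
      by (rule assoc_mult_mat[OF TJn TU], insert Uc STV, auto)
    also have "transpose_mat U * (U * (S * transpose_mat V)) = (transpose_mat U * U) * (S * transpose_mat V)"
      by (rule assoc_mult_mat[OF TU Uc STV, symmetric])
    also have "\<dots> = S * transpose_mat V" unfolding UU by (rule left_mult_one_mat[OF STV])
    also have "transpose_mat Jn * (S * transpose_mat V) = (transpose_mat Jn * S) * transpose_mat V"
      by (rule assoc_mult_mat[OF TJn S TV, symmetric])
    also have "\<dots> = Sk * (transpose_mat Jm * transpose_mat V)" unfolding SL
      by (rule assoc_mult_mat[OF Sk TJm TV])
    also have "transpose_mat Jm * transpose_mat V = transpose_mat (V * Jm)"
      using transpose_mult[OF Vc Jm] by simp
    finally show ?thesis .
  qed
  show ?g3
  proof -
    have "transpose_mat (transpose_mat (U * Jn) * A) = transpose_mat A * (U * Jn)"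
      using transpose_mult[of "transpose_mat (U * Jn)" a n A m] UJn A by simp
    moreover have "transpose_mat (Sk * transpose_mat (V * Jm)) = (V * Jm) * transpose_mat Sk"
      using transpose_mult[of Sk a b "transpose_mat (V * Jm)" m] Sk VJm by simp
    ultimately show ?thesis using g2 by metis
  qed
  show ?g4
  proof -
    have "transpose_mat (A * (V * Jm)) = transpose_mat (V * Jm) * transpose_mat A"
      using transpose_mult[OF A VJm] by simp
    moreover have "transpose_mat ((U * Jn) * Sk) = transpose_mat Sk * transpose_mat (U * Jn)"
      using transpose_mult[OF UJn Sk] by simp
    ultimately show ?thesis using g1 by metis
  qed
qed

lemma telescope:
  fixes X K Y :: "real mat"
  assumes "X \<in> carrier_mat a c" "K \<in> carrier_mat a c" "Y \<in> carrier_mat a c"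
  shows "(X - K) + (K - Y) = X - Y"
  by (rule eq_matI, insert assms, auto)

lemma gen_E:
  fixes L dA W Sg Sg' W' L' A At :: "real mat"
  assumes L: "L \<in> carrier_mat a n" and A: "A \<in> carrier_mat n m" and At: "At \<in> carrier_mat n m"
    and dA: "dA = At - A" and W: "W \<in> carrier_mat m b" and Sg: "Sg \<in> carrier_mat c b"
    and Sg': "Sg' \<in> carrier_mat a e" and W': "W' \<in> carrier_mat m e" and L': "L' \<in> carrier_mat n c"
    and f1: "At * W = L' * Sg" and f2: "L * A = Sg' * transpose_mat W'"
    and f3: "transpose_mat At * L' = W * transpose_mat Sg"
    and f4: "transpose_mat W' * transpose_mat A = transpose_mat Sg' * L"
  shows "L * dA * W * transpose_mat Sg + Sg' * transpose_mat W' * transpose_mat dA * L'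
       = (L * L') * (Sg * transpose_mat Sg) - (Sg' * transpose_mat Sg') * (L * L')"
proof -
  have TSg: "transpose_mat Sg \<in> carrier_mat b c" using Sg by simp
  have TSg': "transpose_mat Sg' \<in> carrier_mat e a" using Sg' by simp
  have TW': "transpose_mat W' \<in> carrier_mat e m" using W' by simp
  have TA: "transpose_mat A \<in> carrier_mat m n" and TAt: "transpose_mat At \<in> carrier_mat m n" using A At by auto
  have TdA: "transpose_mat dA = transpose_mat At - transpose_mat A" unfolding dA
    by (rule eq_matI, insert A At, auto)
  define K where "K = Sg' * transpose_mat W' * W * transpose_mat Sg"
  have LAt: "L * At \<in> carrier_mat a m" and LA: "L * A \<in> carrier_mat a m" using L A At by auto
  have SW: "Sg' * transpose_mat W' \<in> carrier_mat a m" using Sg' TW' by simp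
  have t1: "L * dA * W * transpose_mat Sg = (L * L') * (Sg * transpose_mat Sg) - K"
  proof -
    have "L * dA = L * At - L * A" unfolding dA by (rule mult_minus_distrib_mat[OF L At A])
    hence "L * dA * W * transpose_mat Sg = (L * At - L * A) * W * transpose_mat Sg" by simp
    also have "(L * At - L * A) * W = L * At * W - L * A * W" by (rule minus_mult_distrib_mat[OF LAt LA W])
    also have "(L * At * W - L * A * W) * transpose_mat Sg = L * At * W * transpose_mat Sg - L * A * W * transpose_mat Sg"
      by (rule minus_mult_distrib_mat[OF _ _ TSg], insert LAt LA W, auto)
    also have "L * At * W = L * (L' * Sg)" unfolding f1[symmetric] by (rule assoc_mult_mat[OF L At W])
    also have "\<dots> = (L * L') * Sg" by (rule assoc_mult_mat[OF L L' Sg, symmetric])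
    also have "(L * L') * Sg * transpose_mat Sg = (L * L') * (Sg * transpose_mat Sg)"
      by (rule assoc_mult_mat[OF _ Sg TSg], insert L L', auto)
    also have "L * A * W * transpose_mat Sg = K" unfolding K_def f2 ..
    finally show ?thesis .
  qed
  have t2: "Sg' * transpose_mat W' * transpose_mat dA * L' = K - (Sg' * transpose_mat Sg') * (L * L')"
  proof -
    have "Sg' * transpose_mat W' * transpose_mat dA = Sg' * transpose_mat W' * transpose_mat At - Sg' * transpose_mat W' * transpose_mat A"
      unfolding TdA by (rule mult_minus_distrib_mat[OF SW TAt TA])
    hence "Sg' * transpose_mat W' * transpose_mat dA * L' = (Sg' * transpose_mat W' * transpose_mat At - Sg' * transpose_mat W' * transpose_mat A) * L'"
      by simp
    also have "\<dots> = Sg' * transpose_mat W' * transpose_mat At * L' - Sg' * transpose_mat W' * transpose_mat A * L'"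
      by (rule minus_mult_distrib_mat[OF _ _ L'], insert SW TAt TA, auto)
    also have "Sg' * transpose_mat W' * transpose_mat At * L' = Sg' * transpose_mat W' * (W * transpose_mat Sg)"
      unfolding f3[symmetric] by (rule assoc_mult_mat[OF SW TAt L'])
    also have "\<dots> = K" unfolding K_def by (rule assoc_mult_mat[OF SW W TSg, symmetric])
    also have "Sg' * transpose_mat W' * transpose_mat A = Sg' * (transpose_mat W' * transpose_mat A)"
      by (rule assoc_mult_mat[OF Sg' TW' TA])
    also have "\<dots> = Sg' * transpose_mat Sg' * L" unfolding f4 by (rule assoc_mult_mat[OF Sg' TSg' L, symmetric])
    also have "Sg' * transpose_mat Sg' * L * L' = (Sg' * transpose_mat Sg') * (L * L')"
      by (rule assoc_mult_mat[OF _ L L'], insert Sg' TSg', auto)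
    finally show ?thesis .
  qed
  have K: "K \<in> carrier_mat a c" unfolding K_def using mult_carrier_mat[OF mult_carrier_mat[OF SW W] TSg] .
  have X1: "(L * L') * (Sg * transpose_mat Sg) \<in> carrier_mat a c" using mult_carrier_mat[OF mult_carrier_mat[OF L L'] mult_carrier_mat[OF Sg TSg]] .
  have X2: "(Sg' * transpose_mat Sg') * (L * L') \<in> carrier_mat a c" using mult_carrier_mat[OF mult_carrier_mat[OF Sg' TSg'] mult_carrier_mat[OF L L']] .
  show ?thesis unfolding t1 t2 by (rule telescope[OF X1 K X2])
qed



lemma hadamard_solve:
  fixes X :: "real mat"
  assumes X: "X \<in> carrier_mat a b" and ne: "\<forall>i<a. \<forall>j<b. g j \<noteq> h i"
  shows "mat a b (\<lambda>(i,j). 1 / (g j - h i)) \<circ>\<^sub>H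
     (X * mat b b (\<lambda>(i,j). if i = j then g i else 0) - mat a a (\<lambda>(i,j). if i = j then h i else 0) * X) = X"
proof (rule eq_matI)
  fix i j assume "i < dim_row X" "j < dim_col X"
  hence i: "i < a" and j: "j < b" using X by auto
  have e1: "(X * mat b b (\<lambda>(i,j). if i = j then g i else 0)) $$ (i,j) = X $$ (i,j) * g j"
  proof -
    have "(X * mat b b (\<lambda>(i,j). if i = j then g i else 0)) $$ (i,j) = (\<Sum>l\<in>{0..<b}. X $$ (i,l) * (if l = j then g l else 0))"
      using X i j by (simp add: scalar_prod_def)
    also have "\<dots> = (\<Sum>l\<in>{0..<b}. if l = j then X $$ (i,j) * g j else 0)" by (rule sum.cong, auto)
    also have "\<dots> = X $$ (i,j) * g j" using j by (subst sum_delta_nat, auto)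
    finally show ?thesis .
  qed
  have e2: "(mat a a (\<lambda>(i,j). if i = j then h i else 0) * X) $$ (i,j) = h i * X $$ (i,j)"
  proof -
    have "(mat a a (\<lambda>(i,j). if i = j then h i else 0) * X) $$ (i,j) = (\<Sum>l\<in>{0..<a}. (if i = l then h i else 0) * X $$ (l,j))"
      using X i j by (simp add: scalar_prod_def)
    also have "\<dots> = (\<Sum>l\<in>{0..<a}. if l = i then h i * X $$ (i,j) else 0)" by (rule sum.cong, auto)
    also have "\<dots> = h i * X $$ (i,j)" using i by (subst sum_delta_nat, auto)
    finally show ?thesis .
  qed
  have "g j - h i \<noteq> 0" using ne i j by auto
  thus "(mat a b (\<lambda>(i,j). 1 / (g j - h i)) \<circ>\<^sub>H
     (X * mat b b (\<lambda>(i,j). if i = j then g i else 0) - mat a a (\<lambda>(i,j). if i = j then h i else 0) * X)) $$ (i,j) = X $$ (i,j)"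
    unfolding hadamard_def using i j X e1 e2 by (simp add: field_simps)
qed (insert X, auto simp: hadamard_def)

lemma sval_nonneg:
  assumes "is_full_svd A U S V" shows "0 \<le> sval S i"
  using assms unfolding is_full_svd_def sval_def by auto

lemma sval_mono:
  assumes "is_full_svd A U S V" and "i \<le> j" shows "sval S j \<le> sval S i"
proof -
  have S: "S \<in> carrier_mat (dim_row A) (dim_col A)" using assms unfolding is_full_svd_def by auto
  show ?thesis
  proof (cases "j < min (dim_row S) (dim_col S)")
    case True
    thus ?thesis using assms S unfolding is_full_svd_def sval_def by auto
  next
    case False
    thus ?thesis using sval_nonneg[OF assms(1), of i] unfolding sval_def[of S j] by auto
  qed
qed

lemma sval_blk1:
  assumes S: "S \<in> carrier_mat n m" and r: "r \<le> min n m" and i: "i < r"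
  shows "sval (blk S 0 0 r r) i = sval S i"
  using assms unfolding sval_def blk_def by auto

lemma sval_blk2:
  assumes S: "S \<in> carrier_mat n m" and r: "r \<le> n" "r \<le> m"
  shows "sval (blk S r r (n - r) (m - r)) j = sval S (j + r)"
  using assms unfolding sval_def blk_def by auto

lemma rdiag_blk:
  assumes "rdiag S" "c + a \<le> dim_row S" "c + b \<le> dim_col S"
  shows "rdiag (blk S c c a b)"
  using assms unfolding rdiag_def blk_def by auto



lemma sq_less: "0 \<le> (x::real) \<Longrightarrow> x < y \<Longrightarrow> x^2 < y^2"
  by (simp add: power_strict_mono)

theorem corollary2p4:
  fixes A dA U S V Ut St Vt :: "real mat" and n m r :: nat
  assumes "A \<in> carrier_mat n m" and "dA \<in> carrier_mat n m"
    and "1 \<le> r" and "r < min n m"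
    and "vec_space.rank n A \<ge> r"
    and "is_full_svd A U S V"
    and "is_full_svd (A + dA) Ut St Vt"
    and "sval S (r - 1) - sval St r > 0"
    and "sval St (r - 1) - sval S r > 0"
  shows
   "let U1 = blk U 0 0 n r; U2 = blk U 0 r n (n - r);
        V1 = blk V 0 0 m r; V2 = blk V 0 r m (m - r);
        S1 = blk S 0 0 r r; S2 = blk S r r (n - r) (m - r);
        Ut1 = blk Ut 0 0 n r; Ut2 = blk Ut 0 r n (n - r);
        Vt1 = blk Vt 0 0 m r; Vt2 = blk Vt 0 r m (m - r);
        St1 = blk St 0 0 r r; St2 = blk St r r (n - r) (m - r);
        T = transpose_mat
    in spec_norm (sin_Theta U1 Ut1)
         = spec_norm (F12 S St r n \<circ>\<^sub>H
             (T U1 * dA * Vt2 * T St2 + S1 * T V1 * T dA * Ut2))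
     \<and> spec_norm (sin_Theta U1 Ut1)
         = spec_norm (F21 S St r n \<circ>\<^sub>H
             (T U2 * dA * Vt1 * T St1 + S2 * T V2 * T dA * Ut1))
     \<and> spec_norm (sin_Theta V1 Vt1)
         = spec_norm (F12 S St r m \<circ>\<^sub>H
             (T S1 * T U1 * dA * Vt2 + T V1 * T dA * Ut2 * St2))
     \<and> spec_norm (sin_Theta V1 Vt1)
         = spec_norm (F21 S St r m \<circ>\<^sub>H
             (T S2 * T U2 * dA * Vt1 + T V2 * T dA * Ut1 * St1))"
proof -
  have Ac: "A \<in> carrier_mat n m" and dAc: "dA \<in> carrier_mat n m" and r1: "1 \<le> r" and rmin: "r < min n m"
    and svdA: "is_full_svd A U S V" and svdAt0: "is_full_svd (A + dA) Ut St Vt"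
    and gap1: "sval S (r - 1) - sval St r > 0" and gap2: "sval St (r - 1) - sval S r > 0"
    using assms by auto
  have rn: "r < n" and rm: "r < m" and r0: "0 < r" using rmin r1 by auto
  define At where "At = A + dA"
  have Atc: "At \<in> carrier_mat n m" unfolding At_def using Ac dAc by simp
  have svdAt: "is_full_svd At Ut St Vt" using svdAt0 unfolding At_def .
  have dimA: "dim_row A = n" "dim_col A = m" using Ac by auto
  have dimAt: "dim_row At = n" "dim_col At = m" using Atc by auto
  have U: "orth_mat U n" and V: "orth_mat V m" and S: "S \<in> carrier_mat n m" and Sd: "rdiag S"
    and Aeq: "A = U * S * transpose_mat V"
    using svdA unfolding is_full_svd_def dimA rdiag_def by auto
  have Ut: "orth_mat Ut n" and Vt: "orth_mat Vt m" and St: "St \<in> carrier_mat n m" and Std: "rdiag St"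
    and Ateq: "At = Ut * St * transpose_mat Vt"
    using svdAt unfolding is_full_svd_def dimAt rdiag_def by auto
  have Uc: "U \<in> carrier_mat n n" using U unfolding orth_mat_def by auto
  have Vc: "V \<in> carrier_mat m m" using V unfolding orth_mat_def by auto
  have Utc: "Ut \<in> carrier_mat n n" using Ut unfolding orth_mat_def by auto
  have Vtc: "Vt \<in> carrier_mat m m" using Vt unfolding orth_mat_def by auto
  have dAeq: "dA = At - A" unfolding At_def by (rule eq_matI, insert Ac dAc, auto)
  have TdAeq: "transpose_mat dA = transpose_mat At - transpose_mat A" unfolding dAeq
    by (rule eq_matI, insert Ac Atc, auto)
  define Jn1 where "Jn1 = sel n 0 r"
  define Jn2 where "Jn2 = sel n r (n - r)"
  define Jm1 where "Jm1 = sel m 0 r"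
  define Jm2 where "Jm2 = sel m r (m - r)"
  have Jn1: "Jn1 \<in> carrier_mat n r" and Jn2: "Jn2 \<in> carrier_mat n (n - r)"
    and Jm1: "Jm1 \<in> carrier_mat m r" and Jm2: "Jm2 \<in> carrier_mat m (m - r)"
    unfolding Jn1_def Jn2_def Jm1_def Jm2_def by auto
  have U1eq: "blk U 0 0 n r = U * Jn1" unfolding Jn1_def by (rule blk_sel[OF Uc], insert rn, auto)
  have U2eq: "blk U 0 r n (n - r) = U * Jn2" unfolding Jn2_def by (rule blk_sel[OF Uc], insert rn, auto)
  have V1eq: "blk V 0 0 m r = V * Jm1" unfolding Jm1_def by (rule blk_sel[OF Vc], insert rm, auto)
  have V2eq: "blk V 0 r m (m - r) = V * Jm2" unfolding Jm2_def by (rule blk_sel[OF Vc], insert rm, auto)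
  have Ut1eq: "blk Ut 0 0 n r = Ut * Jn1" unfolding Jn1_def by (rule blk_sel[OF Utc], insert rn, auto)
  have Ut2eq: "blk Ut 0 r n (n - r) = Ut * Jn2" unfolding Jn2_def by (rule blk_sel[OF Utc], insert rn, auto)
  have Vt1eq: "blk Vt 0 0 m r = Vt * Jm1" unfolding Jm1_def by (rule blk_sel[OF Vtc], insert rm, auto)
  have Vt2eq: "blk Vt 0 r m (m - r) = Vt * Jm2" unfolding Jm2_def by (rule blk_sel[OF Vtc], insert rm, auto)
  have U1c: "blk U 0 0 n r \<in> carrier_mat n r" and U2c: "blk U 0 r n (n - r) \<in> carrier_mat n (n - r)"
    and V1c: "blk V 0 0 m r \<in> carrier_mat m r" and V2c: "blk V 0 r m (m - r) \<in> carrier_mat m (m - r)"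
    and Ut1c: "blk Ut 0 0 n r \<in> carrier_mat n r" and Ut2c: "blk Ut 0 r n (n - r) \<in> carrier_mat n (n - r)"
    and Vt1c: "blk Vt 0 0 m r \<in> carrier_mat m r" and Vt2c: "blk Vt 0 r m (m - r) \<in> carrier_mat m (m - r)"
    by (auto simp: blk_def)
  have S1c: "blk S 0 0 r r \<in> carrier_mat r r" and S2c: "blk S r r (n - r) (m - r) \<in> carrier_mat (n - r) (m - r)"
    and St1c: "blk St 0 0 r r \<in> carrier_mat r r" and St2c: "blk St r r (n - r) (m - r) \<in> carrier_mat (n - r) (m - r)"
    by (auto simp: blk_def)
  have SR1: "S * Jm1 = Jn1 * blk S 0 0 r r" unfolding Jm1_def Jn1_def
    by (rule diag_sel_right[OF S Sd], insert rn rm, auto)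
  have SL1: "transpose_mat Jn1 * S = blk S 0 0 r r * transpose_mat Jm1" unfolding Jm1_def Jn1_def
    by (rule diag_sel_left[OF S Sd], insert rn rm, auto)
  have SR2: "S * Jm2 = Jn2 * blk S r r (n - r) (m - r)" unfolding Jm2_def Jn2_def
    by (rule diag_sel_right[OF S Sd], insert rn rm, auto)
  have SL2: "transpose_mat Jn2 * S = blk S r r (n - r) (m - r) * transpose_mat Jm2" unfolding Jm2_def Jn2_def
    by (rule diag_sel_left[OF S Sd], insert rn rm, auto)
  have StR1: "St * Jm1 = Jn1 * blk St 0 0 r r" unfolding Jm1_def Jn1_def
    by (rule diag_sel_right[OF St Std], insert rn rm, auto)
  have StL1: "transpose_mat Jn1 * St = blk St 0 0 r r * transpose_mat Jm1" unfolding Jm1_def Jn1_def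
    by (rule diag_sel_left[OF St Std], insert rn rm, auto)
  have StR2: "St * Jm2 = Jn2 * blk St r r (n - r) (m - r)" unfolding Jm2_def Jn2_def
    by (rule diag_sel_right[OF St Std], insert rn rm, auto)
  have StL2: "transpose_mat Jn2 * St = blk St r r (n - r) (m - r) * transpose_mat Jm2" unfolding Jm2_def Jn2_def
    by (rule diag_sel_left[OF St Std], insert rn rm, auto)
  note FA1 = svd_facts[OF U V S Aeq Jn1 Jm1 S1c SR1 SL1, folded U1eq V1eq]
  note FA2 = svd_facts[OF U V S Aeq Jn2 Jm2 S2c SR2 SL2, folded U2eq V2eq]
  note FAt1 = svd_facts[OF Ut Vt St Ateq Jn1 Jm1 St1c StR1 StL1, folded Ut1eq Vt1eq]
  note FAt2 = svd_facts[OF Ut Vt St Ateq Jn2 Jm2 St2c StR2 StL2, folded Ut2eq Vt2eq]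
  have TAc: "transpose_mat A \<in> carrier_mat m n" and TAtc: "transpose_mat At \<in> carrier_mat m n" using Ac Atc by auto
  have Snn: "\<And>i. 0 \<le> sval S i" by (rule sval_nonneg[OF svdA])
  have Stnn: "\<And>i. 0 \<le> sval St i" by (rule sval_nonneg[OF svdAt])
  have Smono: "\<And>i j. i \<le> j \<Longrightarrow> sval S j \<le> sval S i" by (rule sval_mono[OF svdA])
  have Stmono: "\<And>i j. i \<le> j \<Longrightarrow> sval St j \<le> sval St i" by (rule sval_mono[OF svdAt])
  have ne12: "(sval St (j + r))^2 \<noteq> (sval S i)^2" if "i < r" for i j
  proof -
    have "sval St (j + r) \<le> sval St r" by (rule Stmono, simp)
    moreover have "sval S (r - 1) \<le> sval S i" by (rule Smono, insert that, simp)
    ultimately have "sval St (j + r) < sval S i" using gap1 by simp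
    from sq_less[OF Stnn this] show ?thesis by simp
  qed
  have ne21: "(sval St j)^2 \<noteq> (sval S (i + r))^2" if "j < r" for i j
  proof -
    have "sval S (i + r) \<le> sval S r" by (rule Smono, simp)
    moreover have "sval St (r - 1) \<le> sval St j" by (rule Stmono, insert that, simp)
    ultimately have "sval S (i + r) < sval St j" using gap2 by simp
    from sq_less[OF Snn this] show ?thesis by simp
  qed
  have sS1: "\<And>i. i < r \<Longrightarrow> sval (blk S 0 0 r r) i = sval S i" by (rule sval_blk1[OF S], insert rmin, auto)
  have sSt1: "\<And>i. i < r \<Longrightarrow> sval (blk St 0 0 r r) i = sval St i" by (rule sval_blk1[OF St], insert rmin, auto)
  have sS2: "\<And>j. sval (blk S r r (n - r) (m - r)) j = sval S (j + r)" by (rule sval_blk2[OF S], insert rmin, auto)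
  have sSt2: "\<And>j. sval (blk St r r (n - r) (m - r)) j = sval St (j + r)" by (rule sval_blk2[OF St], insert rmin, auto)
  have dS1: "rdiag (blk S 0 0 r r)" by (rule rdiag_blk[OF Sd], insert S rn rm, auto)
  have dS2: "rdiag (blk S r r (n - r) (m - r))" by (rule rdiag_blk[OF Sd], insert S rn rm, auto)
  have dSt1: "rdiag (blk St 0 0 r r)" by (rule rdiag_blk[OF Std], insert St rn rm, auto)
  have dSt2: "rdiag (blk St r r (n - r) (m - r))" by (rule rdiag_blk[OF Std], insert St rn rm, auto)
  have H1: "F12 S St r n \<circ>\<^sub>H (transpose_mat (blk U 0 0 n r) * dA * blk Vt 0 r m (m - r) * transpose_mat (blk St r r (n - r) (m - r))
      + blk S 0 0 r r * transpose_mat (blk V 0 0 m r) * transpose_mat dA * blk Ut 0 r n (n - r))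
      = transpose_mat (blk U 0 0 n r) * blk Ut 0 r n (n - r)"
  proof -
    have E: "transpose_mat (blk U 0 0 n r) * dA * blk Vt 0 r m (m - r) * transpose_mat (blk St r r (n - r) (m - r))
      + blk S 0 0 r r * transpose_mat (blk V 0 0 m r) * transpose_mat dA * blk Ut 0 r n (n - r)
      = (transpose_mat (blk U 0 0 n r) * blk Ut 0 r n (n - r)) * (blk St r r (n - r) (m - r) * transpose_mat (blk St r r (n - r) (m - r)))
        - (blk S 0 0 r r * transpose_mat (blk S 0 0 r r)) * (transpose_mat (blk U 0 0 n r) * blk Ut 0 r n (n - r))"
      by (rule gen_E[OF _ Ac Atc dAeq Vt2c St2c S1c V1c Ut2c FAt2(1) FA1(2) FAt2(3) FA1(4)], insert U1c, auto)
    have G: "blk St r r (n - r) (m - r) * transpose_mat (blk St r r (n - r) (m - r))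
       = mat (n - r) (n - r) (\<lambda>(i,j). if i = j then (sval St (i + r))^2 else 0)"
      using diag_gram'[OF St2c dSt2] unfolding sSt2 .
    have H: "blk S 0 0 r r * transpose_mat (blk S 0 0 r r) = mat r r (\<lambda>(i,j). if i = j then (sval (blk S 0 0 r r) i)^2 else 0)"
      by (rule diag_gram'[OF S1c dS1])
    have F: "F12 S St r n = mat r (n - r) (\<lambda>(i,j). 1 / ((sval St (j + r))^2 - (sval (blk S 0 0 r r) i)^2))"
      unfolding F12_def by (rule eq_matI, auto simp: sS1)
    have X: "transpose_mat (blk U 0 0 n r) * blk Ut 0 r n (n - r) \<in> carrier_mat r (n - r)" using U1c Ut2c by simp
    have ne: "\<forall>i<r. \<forall>j<n - r. (sval St (j + r))^2 \<noteq> (sval (blk S 0 0 r r) i)^2" using ne12 sS1 by auto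
    show ?thesis unfolding E G H F by (rule hadamard_solve[OF X ne])
  qed
  have H2: "F21 S St r n \<circ>\<^sub>H (transpose_mat (blk U 0 r n (n - r)) * dA * blk Vt 0 0 m r * transpose_mat (blk St 0 0 r r)
      + blk S r r (n - r) (m - r) * transpose_mat (blk V 0 r m (m - r)) * transpose_mat dA * blk Ut 0 0 n r)
      = transpose_mat (blk U 0 r n (n - r)) * blk Ut 0 0 n r"
  proof -
    have E: "transpose_mat (blk U 0 r n (n - r)) * dA * blk Vt 0 0 m r * transpose_mat (blk St 0 0 r r)
      + blk S r r (n - r) (m - r) * transpose_mat (blk V 0 r m (m - r)) * transpose_mat dA * blk Ut 0 0 n r
      = (transpose_mat (blk U 0 r n (n - r)) * blk Ut 0 0 n r) * (blk St 0 0 r r * transpose_mat (blk St 0 0 r r))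
        - (blk S r r (n - r) (m - r) * transpose_mat (blk S r r (n - r) (m - r))) * (transpose_mat (blk U 0 r n (n - r)) * blk Ut 0 0 n r)"
      by (rule gen_E[OF _ Ac Atc dAeq Vt1c St1c S2c V2c Ut1c FAt1(1) FA2(2) FAt1(3) FA2(4)], insert U2c, auto)
    have G: "blk St 0 0 r r * transpose_mat (blk St 0 0 r r) = mat r r (\<lambda>(i,j). if i = j then (sval (blk St 0 0 r r) i)^2 else 0)"
      by (rule diag_gram'[OF St1c dSt1])
    have H: "blk S r r (n - r) (m - r) * transpose_mat (blk S r r (n - r) (m - r))
       = mat (n - r) (n - r) (\<lambda>(i,j). if i = j then (sval S (i + r))^2 else 0)"
      using diag_gram'[OF S2c dS2] unfolding sS2 .
    have F: "F21 S St r n = mat (n - r) r (\<lambda>(i,j). 1 / ((sval (blk St 0 0 r r) j)^2 - (sval S (i + r))^2))"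
      unfolding F21_def by (rule eq_matI, auto simp: sSt1)
    have X: "transpose_mat (blk U 0 r n (n - r)) * blk Ut 0 0 n r \<in> carrier_mat (n - r) r" using U2c Ut1c by simp
    have ne: "\<forall>i<n - r. \<forall>j<r. (sval (blk St 0 0 r r) j)^2 \<noteq> (sval S (i + r))^2" using ne21 sSt1 by auto
    show ?thesis unfolding E G H F by (rule hadamard_solve[OF X ne])
  qed
  have H3: "F12 S St r m \<circ>\<^sub>H (transpose_mat (blk S 0 0 r r) * transpose_mat (blk U 0 0 n r) * dA * blk Vt 0 r m (m - r)
      + transpose_mat (blk V 0 0 m r) * transpose_mat dA * blk Ut 0 r n (n - r) * blk St r r (n - r) (m - r))
      = transpose_mat (blk V 0 0 m r) * blk Vt 0 r m (m - r)"
  proof -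
    have f3: "transpose_mat (transpose_mat At) * blk Vt 0 r m (m - r) = blk Ut 0 r n (n - r) * transpose_mat (transpose_mat (blk St r r (n - r) (m - r)))"
      using FAt2(1) by simp
    have f4: "transpose_mat (blk U 0 0 n r) * transpose_mat (transpose_mat A) = transpose_mat (transpose_mat (blk S 0 0 r r)) * transpose_mat (blk V 0 0 m r)"
      using FA1(2) by simp
    have E0: "transpose_mat (blk V 0 0 m r) * transpose_mat dA * blk Ut 0 r n (n - r) * transpose_mat (transpose_mat (blk St r r (n - r) (m - r)))
      + transpose_mat (blk S 0 0 r r) * transpose_mat (blk U 0 0 n r) * transpose_mat (transpose_mat dA) * blk Vt 0 r m (m - r)
      = (transpose_mat (blk V 0 0 m r) * blk Vt 0 r m (m - r)) * (transpose_mat (blk St r r (n - r) (m - r)) * transpose_mat (transpose_mat (blk St r r (n - r) (m - r))))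
        - (transpose_mat (blk S 0 0 r r) * transpose_mat (transpose_mat (blk S 0 0 r r))) * (transpose_mat (blk V 0 0 m r) * blk Vt 0 r m (m - r))"
      by (rule gen_E[OF _ TAc TAtc TdAeq Ut2c _ _ U1c Vt2c FAt2(3) FA1(4) f3 f4], insert V1c St2c S1c, auto)
    have E: "transpose_mat (blk S 0 0 r r) * transpose_mat (blk U 0 0 n r) * dA * blk Vt 0 r m (m - r)
      + transpose_mat (blk V 0 0 m r) * transpose_mat dA * blk Ut 0 r n (n - r) * blk St r r (n - r) (m - r)
      = (transpose_mat (blk V 0 0 m r) * blk Vt 0 r m (m - r)) * (transpose_mat (blk St r r (n - r) (m - r)) * blk St r r (n - r) (m - r))
        - (transpose_mat (blk S 0 0 r r) * blk S 0 0 r r) * (transpose_mat (blk V 0 0 m r) * blk Vt 0 r m (m - r))"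
    proof -
      have c1: "transpose_mat (blk S 0 0 r r) * transpose_mat (blk U 0 0 n r) * dA * blk Vt 0 r m (m - r) \<in> carrier_mat r (m - r)"
        using mult_carrier_mat[OF mult_carrier_mat[OF mult_carrier_mat[OF transpose_carrier_mat[THEN iffD2, OF S1c] transpose_carrier_mat[THEN iffD2, OF U1c]] dAc] Vt2c] .
      have c2: "transpose_mat (blk V 0 0 m r) * transpose_mat dA * blk Ut 0 r n (n - r) * blk St r r (n - r) (m - r) \<in> carrier_mat r (m - r)"
        using mult_carrier_mat[OF mult_carrier_mat[OF mult_carrier_mat[OF transpose_carrier_mat[THEN iffD2, OF V1c] transpose_carrier_mat[THEN iffD2, OF dAc]] Ut2c] St2c] .
      show ?thesis using E0 comm_add_mat[OF c1 c2] by simp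
    qed
    have G: "transpose_mat (blk St r r (n - r) (m - r)) * blk St r r (n - r) (m - r)
       = mat (m - r) (m - r) (\<lambda>(i,j). if i = j then (sval St (i + r))^2 else 0)"
      using diag_gram[OF St2c dSt2] unfolding sSt2 .
    have H: "transpose_mat (blk S 0 0 r r) * blk S 0 0 r r = mat r r (\<lambda>(i,j). if i = j then (sval (blk S 0 0 r r) i)^2 else 0)"
      by (rule diag_gram[OF S1c dS1])
    have F: "F12 S St r m = mat r (m - r) (\<lambda>(i,j). 1 / ((sval St (j + r))^2 - (sval (blk S 0 0 r r) i)^2))"
      unfolding F12_def by (rule eq_matI, auto simp: sS1)
    have X: "transpose_mat (blk V 0 0 m r) * blk Vt 0 r m (m - r) \<in> carrier_mat r (m - r)" using V1c Vt2c by simp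
    have ne: "\<forall>i<r. \<forall>j<m - r. (sval St (j + r))^2 \<noteq> (sval (blk S 0 0 r r) i)^2" using ne12 sS1 by auto
    show ?thesis unfolding E G H F by (rule hadamard_solve[OF X ne])
  qed
  have H4: "F21 S St r m \<circ>\<^sub>H (transpose_mat (blk S r r (n - r) (m - r)) * transpose_mat (blk U 0 r n (n - r)) * dA * blk Vt 0 0 m r
      + transpose_mat (blk V 0 r m (m - r)) * transpose_mat dA * blk Ut 0 0 n r * blk St 0 0 r r)
      = transpose_mat (blk V 0 r m (m - r)) * blk Vt 0 0 m r"
  proof -
    have f3: "transpose_mat (transpose_mat At) * blk Vt 0 0 m r = blk Ut 0 0 n r * transpose_mat (transpose_mat (blk St 0 0 r r))"
      using FAt1(1) by simp
    have f4: "transpose_mat (blk U 0 r n (n - r)) * transpose_mat (transpose_mat A) = transpose_mat (transpose_mat (blk S r r (n - r) (m - r))) * transpose_mat (blk V 0 r m (m - r))"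
      using FA2(2) by simp
    have E0: "transpose_mat (blk V 0 r m (m - r)) * transpose_mat dA * blk Ut 0 0 n r * transpose_mat (transpose_mat (blk St 0 0 r r))
      + transpose_mat (blk S r r (n - r) (m - r)) * transpose_mat (blk U 0 r n (n - r)) * transpose_mat (transpose_mat dA) * blk Vt 0 0 m r
      = (transpose_mat (blk V 0 r m (m - r)) * blk Vt 0 0 m r) * (transpose_mat (blk St 0 0 r r) * transpose_mat (transpose_mat (blk St 0 0 r r)))
        - (transpose_mat (blk S r r (n - r) (m - r)) * transpose_mat (transpose_mat (blk S r r (n - r) (m - r)))) * (transpose_mat (blk V 0 r m (m - r)) * blk Vt 0 0 m r)"
      by (rule gen_E[OF _ TAc TAtc TdAeq Ut1c _ _ U2c Vt1c FAt1(3) FA2(4) f3 f4], insert V2c St1c S2c, auto)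
    have E: "transpose_mat (blk S r r (n - r) (m - r)) * transpose_mat (blk U 0 r n (n - r)) * dA * blk Vt 0 0 m r
      + transpose_mat (blk V 0 r m (m - r)) * transpose_mat dA * blk Ut 0 0 n r * blk St 0 0 r r
      = (transpose_mat (blk V 0 r m (m - r)) * blk Vt 0 0 m r) * (transpose_mat (blk St 0 0 r r) * blk St 0 0 r r)
        - (transpose_mat (blk S r r (n - r) (m - r)) * blk S r r (n - r) (m - r)) * (transpose_mat (blk V 0 r m (m - r)) * blk Vt 0 0 m r)"
    proof -
      have c1: "transpose_mat (blk S r r (n - r) (m - r)) * transpose_mat (blk U 0 r n (n - r)) * dA * blk Vt 0 0 m r \<in> carrier_mat (m - r) r"
        using mult_carrier_mat[OF mult_carrier_mat[OF mult_carrier_mat[OF transpose_carrier_mat[THEN iffD2, OF S2c] transpose_carrier_mat[THEN iffD2, OF U2c]] dAc] Vt1c] .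
      have c2: "transpose_mat (blk V 0 r m (m - r)) * transpose_mat dA * blk Ut 0 0 n r * blk St 0 0 r r \<in> carrier_mat (m - r) r"
        using mult_carrier_mat[OF mult_carrier_mat[OF mult_carrier_mat[OF transpose_carrier_mat[THEN iffD2, OF V2c] transpose_carrier_mat[THEN iffD2, OF dAc]] Ut1c] St1c] .
      show ?thesis using E0 comm_add_mat[OF c1 c2] by simp
    qed
    have G: "transpose_mat (blk St 0 0 r r) * blk St 0 0 r r = mat r r (\<lambda>(i,j). if i = j then (sval (blk St 0 0 r r) i)^2 else 0)"
      by (rule diag_gram[OF St1c dSt1])
    have H: "transpose_mat (blk S r r (n - r) (m - r)) * blk S r r (n - r) (m - r)
       = mat (m - r) (m - r) (\<lambda>(i,j). if i = j then (sval S (i + r))^2 else 0)"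
      using diag_gram[OF S2c dS2] unfolding sS2 .
    have F: "F21 S St r m = mat (m - r) r (\<lambda>(i,j). 1 / ((sval (blk St 0 0 r r) j)^2 - (sval S (i + r))^2))"
      unfolding F21_def by (rule eq_matI, auto simp: sSt1)
    have X: "transpose_mat (blk V 0 r m (m - r)) * blk Vt 0 0 m r \<in> carrier_mat (m - r) r" using V2c Vt1c by simp
    have ne: "\<forall>i<m - r. \<forall>j<r. (sval (blk St 0 0 r r) j)^2 \<noteq> (sval S (i + r))^2" using ne21 sSt1 by auto
    show ?thesis unfolding E G H F by (rule hadamard_solve[OF X ne])
  qed
  have PU: "spec_norm (sin_Theta (blk U 0 0 n r) (blk Ut 0 0 n r))
           = spec_norm (transpose_mat (blk U 0 0 n r) * blk Ut 0 r n (n - r))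
       \<and> spec_norm (sin_Theta (blk U 0 0 n r) (blk Ut 0 0 n r))
           = spec_norm (transpose_mat (blk U 0 r n (n - r)) * blk Ut 0 0 n r)"
    by (rule pair[OF U Ut r0 rn])
  have PV: "spec_norm (sin_Theta (blk V 0 0 m r) (blk Vt 0 0 m r))
           = spec_norm (transpose_mat (blk V 0 0 m r) * blk Vt 0 r m (m - r))
       \<and> spec_norm (sin_Theta (blk V 0 0 m r) (blk Vt 0 0 m r))
           = spec_norm (transpose_mat (blk V 0 r m (m - r)) * blk Vt 0 0 m r)"
    by (rule pair[OF V Vt r0 rm])
  show ?thesis unfolding Let_def H1 H2 H3 H4 using PU PV by blast
qed


end
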